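(* Let $f:U\to H^3$ and $g:U\to S^3_1$ be the dual flat fronts described below. Let $p\in\Sigma(f)=\Sigma(g)$ be a cuspidal edge of $f$ (resp. $g$) and $\gamma$ a singular curve through $p=\gamma(0)$. Then $\gamma$ is a line of curvature of $f$ (resp. $g$) if and only if $\kappa_t^h$ (resp. $\kappa_t^d$) vanishes identically on $\gamma$.
   Context: Let $U\subset\boldsymbol{C}$ be a domain, $\alpha,\beta:U\to\boldsymbol{C}\setminus\{0\}$ holomorphic, $A:U\to SL(2,\boldsymbol{C})$ a solution of $A'=AD$ with $D=\begin{pmatrix}0&\alpha\\ \beta&0\end{pmatrix}$, and, identifying Lorentz–Minkowski 4-space with $2\times2$ Hermitian matrices, $f=AA^*:U\to H^3$ (hyperbolic 3-space) and $g=Ae_3A^*:U\to S^3_1$ (de Sitter 3-space), $e_3=\mathrm{diag}(1,-1)$. These are flat fronts, each the unit normal of the other, with $\Sigma(f)=\Sigma(g)=\{\alpha\overline{\alpha}-\beta\overline{\beta}=0\}$. $\kappa_t^h$ and $\kappa_t^d$ denote the cuspidal torsions of $f$ and $g$ along the singular curve. A curve $\gamma$ in $U$ is a line of curvature of a frontal $k$ if the first fundamental form applied to $(k\circ\gamma)'$ is parallel to the second fundamental form applied to $(k\circ\gamma)'$. *)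

theory Defs
  imports "HOL-Analysis.Analysis"
begin

fun dd :: "'a list \<Rightarrow> ('a::real_normed_vector \<Rightarrow> 'b::real_normed_vector) \<Rightarrow> 'a \<Rightarrow> 'b" where
  "dd [] f = f"
| "dd (v # vs) f = (\<lambda>x. frechet_derivative (dd vs f) (at x) v)"

definition cinf_on :: "'a set \<Rightarrow> ('a::real_normed_vector \<Rightarrow> 'b::real_normed_vector) \<Rightarrow> bool" where
  "cinf_on S f \<longleftrightarrow> open S \<and> (\<forall>vs. \<forall>x\<in>S. dd vs f differentiable (at x))"

definition local_diffeo :: "'a set \<Rightarrow> ('a::real_normed_vector \<Rightarrow> 'a) \<Rightarrow> bool" where
  "local_diffeo V \<phi> \<longleftrightarrow> open V \<and> open (\<phi> ` V) \<and> inj_on \<phi> V \<and> cinf_on V \<phi>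
      \<and> cinf_on (\<phi> ` V) (inv_into V \<phi>)"

definition herm_adj :: "complex^2^2 \<Rightarrow> complex^2^2" where
  "herm_adj X = (\<chi> i j. cnj (X $ j $ i))"

definition e3 :: "complex^2^2" where
  "e3 = (\<chi> i j. if i = j then (if i = 1 then 1 else -1) else 0)"

definition Dmat :: "complex \<Rightarrow> complex \<Rightarrow> complex^2^2" where
  "Dmat a b = (\<chi> i j. if i = 1 \<and> j = 2 then a else if i = 2 \<and> j = 1 then b else 0)"

text \<open>Coordinates of a Hermitian matrix
  X = [[x0+x3, x1+i x2],[x1-i x2, x0-x3]] as a point (x0,x1,x2,x3) of L^4.\<close>
definition herm4 :: "complex^2^2 \<Rightarrow> real^4" where
  "herm4 X = vector [Re (X$1$1 + X$2$2) / 2, Re (X$1$2), Im (X$1$2), Re (X$1$1 - X$2$2) / 2]"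

text \<open>Lorentz inner product of signature (-,+,+,+); lor (herm4 X) (herm4 X) = - det X.\<close>
definition lor :: "real^4 \<Rightarrow> real^4 \<Rightarrow> real" where
  "lor x y = - x$1 * y$1 + x$2 * y$2 + x$3 * y$3 + x$4 * y$4"

definition det4 :: "real^4 \<Rightarrow> real^4 \<Rightarrow> real^4 \<Rightarrow> real^4 \<Rightarrow> real" where
  "det4 a b c d = det (vector [a, b, c, d] :: real^4^4)"

definition hyp_front :: "(complex \<Rightarrow> complex^2^2) \<Rightarrow> complex \<Rightarrow> real^4" where
  "hyp_front A z = herm4 (A z ** herm_adj (A z))"

definition ds_front :: "(complex \<Rightarrow> complex^2^2) \<Rightarrow> complex \<Rightarrow> real^4" where
  "ds_front A z = herm4 (A z ** e3 ** herm_adj (A z))"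

definition sing_set :: "complex set \<Rightarrow> (complex \<Rightarrow> real^4) \<Rightarrow> complex set" where
  "sing_set U F = {z\<in>U. \<not> inj (frechet_derivative F (at z))}"

text \<open>p is a cuspidal edge of F: the germ of F at p is A-equivalent to the germ at 0 of
  (u,v) \<mapsto> (u, v^2, v^3) (inside R^4, last coordinate 0).  Source R^2 is C.\<close>
definition cusp_edge :: "complex set \<Rightarrow> (complex \<Rightarrow> real^4) \<Rightarrow> complex \<Rightarrow> bool" where
  "cusp_edge U F p \<longleftrightarrow> p \<in> U \<and> (\<exists>V \<phi> W \<Phi>. 0 \<in> V \<and> local_diffeo V \<phi> \<and> \<phi> 0 = p \<and> \<phi> ` V \<subseteq> U
      \<and> F p \<in> W \<and> local_diffeo W \<Phi> \<and> F ` (\<phi> ` V) \<subseteq> W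
      \<and> (\<forall>x\<in>V. \<Phi> (F (\<phi> x)) = vector [Re x, (Im x)^2, (Im x)^3, 0]))"

definition sing_curve :: "complex set \<Rightarrow> (complex \<Rightarrow> real^4) \<Rightarrow> (real \<Rightarrow> complex) \<Rightarrow> real \<Rightarrow> complex \<Rightarrow> bool" where
  "sing_curve U F \<gamma> \<epsilon> p \<longleftrightarrow> \<epsilon> > 0 \<and> cinf_on {-\<epsilon><..<\<epsilon>} \<gamma> \<and> \<gamma> 0 = p
     \<and> (\<forall>t\<in>{-\<epsilon><..<\<epsilon>}. vector_derivative \<gamma> (at t) \<noteq> 0 \<and> \<gamma> t \<in> sing_set U F)"

definition null_vf :: "complex set \<Rightarrow> (complex \<Rightarrow> real^4) \<Rightarrow> (complex \<Rightarrow> complex) \<Rightarrow> complex set \<Rightarrow> bool" where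
  "null_vf U F \<eta> V \<longleftrightarrow> open V \<and> V \<subseteq> U \<and> cinf_on V \<eta>
     \<and> (\<forall>q\<in>V \<inter> sing_set U F. \<eta> q \<noteq> 0 \<and> frechet_derivative F (at q) (\<eta> q) = 0)"

text \<open>Rodrigues-type condition: the velocities of K o gamma and of its unit normal
  N o gamma are parallel (linearly dependent) at every parameter in S.\<close>
definition line_of_curvature :: "(complex \<Rightarrow> real^4) \<Rightarrow> (complex \<Rightarrow> real^4) \<Rightarrow> (real \<Rightarrow> complex) \<Rightarrow> real set \<Rightarrow> bool" where
  "line_of_curvature K N \<gamma> S \<longleftrightarrow> (\<forall>t\<in>S. \<exists>a b. (a, b) \<noteq> (0::real, 0::real) \<and>
      a *\<^sub>R vector_derivative (K \<circ> \<gamma>) (at t) + b *\<^sub>R vector_derivative (N \<circ> \<gamma>) (at t) = 0)"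

definition eta_d :: "(complex \<Rightarrow> complex) \<Rightarrow> (complex \<Rightarrow> real^4) \<Rightarrow> complex \<Rightarrow> real^4" where
  "eta_d \<eta> H = (\<lambda>z. frechet_derivative H (at z) (\<eta> z))"

definition gram :: "real^4 \<Rightarrow> real^4 \<Rightarrow> real" where
  "gram a b = lor a a * lor b b - (lor a b)^2"

text \<open>Cuspidal torsion (Martins-Saji formula transplanted to the space forms in L^4):
  with gh = F o gamma and X = eta eta F along gamma,
  k_t = det(F, gh', X, X')/|gh' ^ X|^2 - det(F, gh', X, gh'') <gh', X> / (|gh'|^2 |gh' ^ X|^2).\<close>
definition cusp_torsion :: "(complex \<Rightarrow> real^4) \<Rightarrow> (real \<Rightarrow> complex) \<Rightarrow> (complex \<Rightarrow> complex) \<Rightarrow> real \<Rightarrow> real" where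
  "cusp_torsion F \<gamma> \<eta> t =
    (let g1 = (\<lambda>s. vector_derivative (F \<circ> \<gamma>) (at s));
         g2 = vector_derivative g1 (at t);
         X = (\<lambda>s. eta_d \<eta> (eta_d \<eta> F) (\<gamma> s));
         X1 = vector_derivative X (at t)
     in det4 (F (\<gamma> t)) (g1 t) (X t) X1 / gram (g1 t) (X t)
        - det4 (F (\<gamma> t)) (g1 t) (X t) g2 * lor (g1 t) (X t)
            / (lor (g1 t) (g1 t) * gram (g1 t) (X t)))"

end

theory Submission
  imports Defs "HOL-Complex_Analysis.Cauchy_Integral_Formula"
begin


lemma vector_4 [simp]:
 "(vector [x,y,z,w] ::('a::zero)^4)$1 = x"
 "(vector [x,y,z,w] ::('a::zero)^4)$2 = y"
 "(vector [x,y,z,w] ::('a::zero)^4)$3 = z"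
 "(vector [x,y,z,w] ::('a::zero)^4)$4 = w"
  unfolding vector_def by simp_all

lemma sum4: "(\<Sum>i\<in>UNIV. f i) = f (1::4) + f 2 + f 3 + f 4"
  unfolding UNIV_4 by (simp add: ac_simps)

lemma sum2': "(\<Sum>i\<in>UNIV. f i) = f (1::2) + f 2"
  unfolding UNIV_2 by simp

lemma vec4_eq: "(x::'a^4) = y \<longleftrightarrow> x$1 = y$1 \<and> x$2 = y$2 \<and> x$3 = y$3 \<and> x$4 = y$4"
  by (simp add: vec_eq_iff forall_4)

lemma mat2_eq: "(X::'a^2^2) = Y \<longleftrightarrow> X$1$1 = Y$1$1 \<and> X$1$2 = Y$1$2 \<and> X$2$1 = Y$2$1 \<and> X$2$2 = Y$2$2"
  by (simp add: vec_eq_iff forall_2)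

lemma mm2: "((X::'a::semiring_1^2^2) ** (Y::'a^2^2)) $ i $ j = X$i$1 * Y$1$j + X$i$2 * Y$2$j"
  by (simp add: matrix_matrix_mult_def sum2')

lemma det_4:
  "det (A::'a::comm_ring_1^4^4) =
     A $ 1 $ 1 * (A $ 2 $ 2 * (A $ 3 $ 3 * A $ 4 $ 4)) -
     A $ 1 $ 1 * (A $ 2 $ 2 * (A $ 3 $ 4 * A $ 4 $ 3)) +
     (A $ 1 $ 1 * (A $ 2 $ 3 * (A $ 3 $ 4 * A $ 4 $ 2)) -
      A $ 1 $ 1 * (A $ 2 $ 3 * (A $ 3 $ 2 * A $ 4 $ 4)) +
      (A $ 1 $ 1 * (A $ 2 $ 4 * (A $ 3 $ 2 * A $ 4 $ 3)) -
       A $ 1 $ 1 * (A $ 2 $ 4 * (A $ 3 $ 3 * A $ 4 $ 2)))) +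
     (A $ 1 $ 2 * (A $ 2 $ 1 * (A $ 3 $ 4 * A $ 4 $ 3)) -
      A $ 1 $ 2 * (A $ 2 $ 1 * (A $ 3 $ 3 * A $ 4 $ 4)) +
      (A $ 1 $ 2 * (A $ 2 $ 3 * (A $ 3 $ 1 * A $ 4 $ 4)) -
       A $ 1 $ 2 * (A $ 2 $ 3 * (A $ 3 $ 4 * A $ 4 $ 1)) +
       (A $ 1 $ 2 * (A $ 2 $ 4 * (A $ 3 $ 3 * A $ 4 $ 1)) -
        A $ 1 $ 2 * (A $ 2 $ 4 * (A $ 3 $ 1 * A $ 4 $ 3)))) +
      (A $ 1 $ 3 * (A $ 2 $ 2 * (A $ 3 $ 4 * A $ 4 $ 1)) -
       A $ 1 $ 3 * (A $ 2 $ 2 * (A $ 3 $ 1 * A $ 4 $ 4)) +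
       (A $ 1 $ 3 * (A $ 2 $ 1 * (A $ 3 $ 2 * A $ 4 $ 4)) -
        A $ 1 $ 3 * (A $ 2 $ 1 * (A $ 3 $ 4 * A $ 4 $ 2)) +
        (A $ 1 $ 3 * (A $ 2 $ 4 * (A $ 3 $ 1 * A $ 4 $ 2)) -
         A $ 1 $ 3 * (A $ 2 $ 4 * (A $ 3 $ 2 * A $ 4 $ 1)))) +
       (A $ 1 $ 4 * (A $ 2 $ 2 * (A $ 3 $ 1 * A $ 4 $ 3)) -
        A $ 1 $ 4 * (A $ 2 $ 2 * (A $ 3 $ 3 * A $ 4 $ 1)) +
        (A $ 1 $ 4 * (A $ 2 $ 3 * (A $ 3 $ 2 * A $ 4 $ 1)) -
         A $ 1 $ 4 * (A $ 2 $ 3 * (A $ 3 $ 1 * A $ 4 $ 2)) +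
         (A $ 1 $ 4 * (A $ 2 $ 1 * (A $ 3 $ 3 * A $ 4 $ 2)) -
          A $ 1 $ 4 * (A $ 2 $ 1 * (A $ 3 $ 2 * A $ 4 $ 3)))))))"
proof -
  have f1: "finite {2::4, 3, 4}" "1 \<notin> {2::4, 3, 4}" by auto
  have f2: "finite {3::4, 4}" "2 \<notin> {3::4, 4}" by auto
  have f3: "finite {4::4}" "3 \<notin> {4::4}" by auto
  show ?thesis
    unfolding det_def UNIV_4
    unfolding sum_over_permutations_insert[OF f1]
    unfolding sum_over_permutations_insert[OF f2]
    unfolding sum_over_permutations_insert[OF f3]
    unfolding permutes_sing
    apply (simp only: sum.insert_if finite.intros insert_iff empty_iff sum.empty)
    apply (simp add: sign_compose permutation_swap_id permutation_compose sign_swap_id)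
    done
qed

definition hm :: "real^4 \<Rightarrow> complex^2^2" where
  "hm x = (\<chi> i j. if i = 1 \<and> j = 1 then complex_of_real (x$1 + x$4)
     else if i = 1 \<and> j = 2 then Complex (x$2) (x$3)
     else if i = 2 \<and> j = 1 then Complex (x$2) (- x$3)
     else complex_of_real (x$1 - x$4))"

lemma hm_nth [simp]:
  "hm x $ 1 $ 1 = complex_of_real (x$1 + x$4)"
  "hm x $ 1 $ 2 = Complex (x$2) (x$3)"
  "hm x $ 2 $ 1 = Complex (x$2) (- x$3)"
  "hm x $ 2 $ 2 = complex_of_real (x$1 - x$4)"
  by (simp_all add: hm_def)

lemma herm_adj_nth [simp]: "herm_adj X $ i $ j = cnj (X $ j $ i)"
  by (simp add: herm_adj_def)

lemma herm4_nth [simp]: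
  "herm4 X $ 1 = Re (X$1$1 + X$2$2) / 2"
  "herm4 X $ 2 = Re (X$1$2)"
  "herm4 X $ 3 = Im (X$1$2)"
  "herm4 X $ 4 = Re (X$1$1 - X$2$2) / 2"
  by (simp_all add: herm4_def)

lemma herm4_hm [simp]: "herm4 (hm x) = x"
  unfolding vec4_eq by simp

definition hermitian :: "complex^2^2 \<Rightarrow> bool" where
  "hermitian X \<longleftrightarrow> herm_adj X = X"

lemma hermitian_iff: "hermitian X \<longleftrightarrow> Im (X$1$1) = 0 \<and> Im (X$2$2) = 0 \<and> X$2$1 = cnj (X$1$2)"
  unfolding hermitian_def mat2_eq by (auto simp: complex_eq_iff)

lemma hm_herm4: "hermitian X \<Longrightarrow> hm (herm4 X) = X"
  unfolding hermitian_iff mat2_eq by (auto simp: complex_eq_iff field_simps)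

lemma hermitian_hm [simp]: "hermitian (hm x)"
  by (simp add: hermitian_iff complex_cnj)

lemma sc_nth [simp]: "((r::real) *\<^sub>R (X::complex^2^2)) $ i $ j = complex_of_real r * X $ i $ j"
  apply (subst vector_scaleR_component)+ apply (rule scaleR_conv_of_real) done

lemma herm_adj_mult: "herm_adj (X ** Y) = herm_adj Y ** herm_adj X"
  unfolding mat2_eq by (simp add: mm2 mult.commute)

lemma herm_adj_herm_adj [simp]: "herm_adj (herm_adj X) = X"
  unfolding mat2_eq by simp

lemma hermitian_conj: "hermitian M \<Longrightarrow> hermitian (B ** M ** herm_adj B)"
  unfolding hermitian_def by (simp add: herm_adj_mult matrix_mul_assoc)

lemma herm4_add: "herm4 (X + Y) = herm4 X + herm4 Y"
  unfolding vec4_eq by simp (simp add: field_simps)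

lemma herm4_scaleR: "herm4 (r *\<^sub>R X) = r *\<^sub>R herm4 X"
  unfolding vec4_eq by (simp add: del: scaleR_conv_of_real) (simp add: algebra_simps)

lemma herm4_diff: "herm4 (X - Y) = herm4 X - herm4 Y"
  unfolding vec4_eq by simp (simp add: field_simps)

lemma linear_herm4: "linear herm4"
  by (rule linearI) (simp_all add: herm4_add herm4_scaleR)

lemma bounded_linear_herm4: "bounded_linear herm4"
  using linear_herm4 linear_conv_bounded_linear by blast

lemma linear_herm_adj: "linear herm_adj"
  by (rule linearI) (simp_all add: mat2_eq del: scaleR_conv_of_real)

lemma bounded_linear_herm_adj: "bounded_linear herm_adj"
  using linear_herm_adj linear_conv_bounded_linear by blast

lemma mm_add_left: "((A::complex^2^2) + B) ** (C::complex^2^2) = A ** C + B ** C"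
  unfolding mat2_eq by (simp add: mm2 algebra_simps)

lemma mm_scaleR_left: "(r *\<^sub>R (X::complex^2^2)) ** (Y::complex^2^2) = r *\<^sub>R (X ** Y)"
  unfolding mat2_eq by (simp add: mm2 algebra_simps del: scaleR_conv_of_real)

lemma mm_scaleR_right: "(X::complex^2^2) ** (r *\<^sub>R Y::complex^2^2) = r *\<^sub>R (X ** Y)"
  unfolding mat2_eq by (simp add: mm2 algebra_simps del: scaleR_conv_of_real)

lemma bilinear_mm: "bilinear (\<lambda>(X::complex^2^2) (Y::complex^2^2). X ** Y)"
  unfolding bilinear_def
  by (auto intro!: linearI simp: mm_add_left matrix_add_ldistrib mm_scaleR_left mm_scaleR_right simp del: scaleR_conv_of_real)

lemma bounded_bilinear_mm: "bounded_bilinear (\<lambda>(X::complex^2^2) (Y::complex^2^2). X ** Y)"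
  using bilinear_mm bilinear_conv_bounded_bilinear by blast

lemma hm_add: "hm (x + y) = hm x + hm y"
  unfolding mat2_eq by (simp add: complex_eq_iff)

lemma hm_scaleR: "hm (r *\<^sub>R x) = r *\<^sub>R hm x"
  unfolding mat2_eq by (simp add: complex_eq_iff algebra_simps del: scaleR_conv_of_real)

lemma linear_hm: "linear hm"
  by (rule linearI) (simp_all add: hm_add hm_scaleR)

lemma bounded_linear_hm: "bounded_linear hm"
  using linear_hm linear_conv_bounded_linear by blast

lemma det_herm_adj: "det (herm_adj X) = cnj (det X)"
  by (simp add: det_2)

lemma lor_herm4: "hermitian X \<Longrightarrow> lor (herm4 X) (herm4 X) = - Re (det X)"
  unfolding hermitian_iff
  by (auto simp: det_2 lor_def power2_eq_square field_simps)

lemma lor_sym: "lor x y = lor y x"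
  by (simp add: lor_def algebra_simps)

lemma lor_polar: "lor x y = (lor (x+y) (x+y) - lor x x - lor y y) / 2"
  by (simp add: lor_def algebra_simps)

definition Tm :: "complex^2^2 \<Rightarrow> real^4 \<Rightarrow> real^4" where
  "Tm B x = herm4 (B ** hm x ** herm_adj B)"

lemma Tm_add: "Tm B (x + y) = Tm B x + Tm B y"
  by (simp add: Tm_def hm_add matrix_add_ldistrib mm_add_left herm4_add)


lemma Tm_scaleR: "Tm B (r *\<^sub>R x) = r *\<^sub>R Tm B x"
  by (simp add: Tm_def hm_scaleR mm_scaleR_left mm_scaleR_right herm4_scaleR)

lemma linear_Tm: "linear (Tm B)"
  by (rule linearI) (simp_all add: Tm_add Tm_scaleR)

lemma Tm_diff: "Tm B (x - y) = Tm B x - Tm B y"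
  using linear_diff[OF linear_Tm] by blast

lemma Tm_zero [simp]: "Tm B 0 = 0"
  using linear_0[OF linear_Tm] by blast

lemma lor_Tm_sq: "lor (Tm B x) (Tm B x) = (cmod (det B))^2 * lor x x"
proof -
  have "lor (Tm B x) (Tm B x) = - Re (det (B ** hm x ** herm_adj B))"
    unfolding Tm_def by (rule lor_herm4[OF hermitian_conj[OF hermitian_hm]])
  also have "\<dots> = - Re (det B * det (hm x) * cnj (det B))"
    by (simp add: det_mul det_herm_adj)
  also have "\<dots> = (cmod (det B))^2 * (- Re (det (hm x)))"
  proof -
    have n: "det B * cnj (det B) = complex_of_real ((cmod (det B))^2)"
      by (rule complex_norm_square[symmetric])
    have "det B * det (hm x) * cnj (det B) = (det B * cnj (det B)) * det (hm x)"
      by (simp add: ac_simps)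
    also have "\<dots> = complex_of_real ((cmod (det B))^2) * det (hm x)"
      by (simp only: n)
    moreover have "Im (det (hm x)) = 0" by (simp add: det_2)
    ultimately show ?thesis by (simp add: cmod_power2 algebra_simps)
  qed
  also have "- Re (det (hm x)) = lor x x"
    using lor_herm4[OF hermitian_hm, of x] by simp
  finally show ?thesis .
qed

lemma lor_expand: "lor (x + y) (x + y) = lor x x + 2 * lor x y + lor y y"
  by (simp add: lor_def algebra_simps)

lemma lor_Tm: "lor (Tm B x) (Tm B y) = (cmod (det B))^2 * lor x y"
proof -
  have "lor (Tm B (x + y)) (Tm B (x + y)) = (cmod (det B))^2 * lor (x + y) (x + y)"
    by (rule lor_Tm_sq)
  then show ?thesis
    unfolding Tm_add lor_expand lor_Tm_sq by (simp add: algebra_simps)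
qed

lemma lor_nondeg: "(\<And>y. lor x y = 0) \<Longrightarrow> x = 0"
proof -
  assume h: "\<And>y. lor x y = 0"
  have "lor x (vector [- x$1, x$2, x$3, x$4]) = 0" by (rule h)
  then have "(x$1)^2 + (x$2)^2 + (x$3)^2 + (x$4)^2 = 0"
    by (simp add: lor_def power2_eq_square)
  then show "x = 0"
    unfolding vec4_eq by (simp add: add_nonneg_eq_0_iff)
qed

lemma Tm_inj: assumes "det B \<noteq> 0" shows "inj (Tm B)"
proof (rule injI)
  fix x y assume "Tm B x = Tm B y"
  then have e: "Tm B (x - y) = 0" by (simp add: Tm_diff)
  have "lor (x - y) z = 0" for z
  proof -
    have "lor (Tm B (x - y)) (Tm B z) = 0" by (simp add: e lor_def)
    then show ?thesis using assms by (simp add: lor_Tm)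
  qed
  then have "x - y = 0" by (rule lor_nondeg)
  then show "x = y" by simp
qed

lemma Tm_eq_0_iff: "det B \<noteq> 0 \<Longrightarrow> Tm B x = 0 \<longleftrightarrow> x = 0"
  using Tm_inj[of B] by (metis Tm_zero injD)

lemma det4_mat: "det4 (M *v a) (M *v b) (M *v c) (M *v d) = det M * det4 a b c d"
proof -
  have "(vector [M *v a, M *v b, M *v c, M *v d] :: real^4^4) = vector [a, b, c, d] ** transpose M"
    by (simp add: vec_eq_iff forall_4 matrix_matrix_mult_def matrix_vector_mult_def transpose_def sum4 mult.commute)
  then show ?thesis unfolding det4_def by (simp add: det_mul)
qed

lemma det4_Tm:
  assumes "det B \<noteq> 0"
  shows "\<exists>k. k \<noteq> 0 \<and> (\<forall>a b c d. det4 (Tm B a) (Tm B b) (Tm B c) (Tm B d) = k * det4 a b c d)"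
proof -
  let ?M = "matrix (Tm B)"
  have mv: "Tm B x = ?M *v x" for x using matrix_vector_mul(2)[OF linear_Tm, of B] by metis
  have "det ?M \<noteq> 0" using det_nz_iff_inj[OF linear_Tm] Tm_inj[OF assms] by blast
  then show ?thesis by (intro exI[of _ "det ?M"]) (simp add: mv det4_mat)
qed

definition od :: "complex \<Rightarrow> real^4" where
  "od w = vector [0, Re w, Im w, 0]"

lemma od_nth [simp]: "od w $ 1 = 0" "od w $ 2 = Re w" "od w $ 3 = Im w" "od w $ 4 = 0"
  by (simp_all add: od_def)

lemma hm_od: "hm (od w) = (\<chi> i j. if i = 1 \<and> j = 2 then w else if i = 2 \<and> j = 1 then cnj w else 0)"
  unfolding mat2_eq by (simp add: complex_eq_iff)

lemma hm_od_nth [simp]: "hm (od w) $ 1 $ 1 = 0" "hm (od w) $ 1 $ 2 = w" "hm (od w) $ 2 $ 1 = cnj w" "hm (od w) $ 2 $ 2 = 0"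
  by (simp_all add: complex_eq_iff)

lemma od_add: "od (a + b) = od a + od b" unfolding vec4_eq by simp
lemma od_scaleR: "od (r *\<^sub>R a) = r *\<^sub>R od a" unfolding vec4_eq by simp
lemma od_of_real_mult: "od (complex_of_real r * a) = r *\<^sub>R od a" unfolding vec4_eq by simp
lemma od_eq_0 [simp]: "od a = 0 \<longleftrightarrow> a = 0" unfolding vec4_eq by (simp add: complex_eq_iff)
lemma linear_od: "linear od" by (rule linearI) (simp_all add: od_add od_scaleR)
lemma bounded_linear_od: "bounded_linear od" using linear_od linear_conv_bounded_linear by blast

definition es :: "real \<Rightarrow> real^4" where
  "es s = vector [(1 + s) / 2, 0, 0, (1 - s) / 2]"

lemma es_nth [simp]: "es s $ 1 = (1 + s) / 2" "es s $ 2 = 0" "es s $ 3 = 0" "es s $ 4 = (1 - s) / 2"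
  by (simp_all add: es_def)

lemma Complex_00 [simp]: "Complex 0 0 = 0"
  by (simp add: complex_eq_iff)

lemma hm_es_1: "hm (es 1) = mat 1"
  unfolding mat2_eq by (simp add: mat_def)

lemma hm_es_m1: "hm (es (-1)) = e3"
  unfolding mat2_eq by (simp add: e3_def)

definition crs :: "complex \<Rightarrow> complex \<Rightarrow> real" where
  "crs a b = Re a * Im b - Im a * Re b"

definition dotc :: "complex \<Rightarrow> complex \<Rightarrow> real" where
  "dotc a b = Re a * Re b + Im a * Im b"

definition Qs :: "real \<Rightarrow> real^4 \<Rightarrow> real" where
  "Qs s z = (1 + s) / 2 * z$4 - (1 - s) / 2 * z$1"

lemma det4_frame: "det4 (es s) (od a) (od b) z = crs a b * Qs s z"
  unfolding det4_def det_4 by (simp add: crs_def Qs_def) (simp add: field_simps)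

lemma lor_od: "lor (od a) (od b) = dotc a b"
  by (simp add: lor_def dotc_def)

lemma gram_od: "gram (od a) (od b) = (crs a b)^2"
  by (simp add: gram_def lor_od dotc_def crs_def power2_eq_square algebra_simps)

definition Wf :: "real \<Rightarrow> complex \<Rightarrow> complex \<Rightarrow> complex \<Rightarrow> complex" where
  "Wf s a b v = complex_of_real s * a * v + cnj (b * v)"

lemma Dmat_nth [simp]: "Dmat a b $ 1 $ 1 = 0" "Dmat a b $ 1 $ 2 = a" "Dmat a b $ 2 $ 1 = b" "Dmat a b $ 2 $ 2 = 0"
  by (simp_all add: Dmat_def)

lemma frame_first: "Dmat a b ** hm (es s) + hm (es s) ** herm_adj (Dmat a b) = hm (od (Wf s a b 1))"
  unfolding mat2_eq by (simp add: mm2 Wf_def complex_eq_iff) (simp add: field_simps)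

lemma frame_second:
  "herm4 (Dmat a b ** hm (od c) + hm (od c) ** herm_adj (Dmat a b))
     = vector [Re (a * cnj c) + Re (b * c), 0, 0, Re (a * cnj c) - Re (b * c)]"
  unfolding vec4_eq by (simp add: mm2)

lemma frame_second_herm: "hermitian (Dmat a b ** hm x + hm x ** herm_adj (Dmat a b))"
  by (simp add: hermitian_iff mm2 algebra_simps)

lemma Qs_frame_second:
  "Qs s (herm4 (Dmat a b ** hm (od c) + hm (od c) ** herm_adj (Dmat a b)) + od d)
    = - dotc (Wf (-s) a b 1) c"
  unfolding frame_second Qs_def Wf_def dotc_def
  by (simp) (simp add: field_simps)


lemma vec_has_derivative:
  fixes f :: "'x::real_normed_vector \<Rightarrow> 'b::euclidean_space^'n"
  assumes "\<And>i. ((\<lambda>x. f x $ i) has_derivative (\<lambda>h. f' h $ i)) (at a within S)"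
  shows "(f has_derivative f') (at a within S)"
proof (subst has_derivative_componentwise_within, intro ballI)
  fix b :: "'b^'n" assume "b \<in> Basis"
  then obtain i u where b: "b = axis i u" "u \<in> Basis" by (auto simp: Basis_vec_def)
  show "((\<lambda>x. f x \<bullet> b) has_derivative (\<lambda>x. f' x \<bullet> b)) (at a within S)"
    unfolding b inner_axis using has_derivative_inner_left[OF assms[of i]] .
qed

lemma A_has_derivative:
  fixes A :: "complex \<Rightarrow> complex^2^2"
  assumes "\<forall>i j. ((\<lambda>w. A w $ i $ j) has_field_derivative ((A z ** Dmat a b) $ i $ j)) (at z)"
  shows "(A has_derivative (\<lambda>h. A z ** Dmat (a * h) (b * h))) (at z)"
proof -
  have e0: "(A z ** Dmat (a * h) (b * h)) $ i $ j = (A z ** Dmat a b) $ i $ j * h" for i j h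
    using exhaust_2[of i] exhaust_2[of j] by (auto simp: mm2 algebra_simps)
  have e: "(\<lambda>h. (A z ** Dmat (a * h) (b * h)) $ i $ j) = (*) ((A z ** Dmat a b) $ i $ j)" for i j
    by (rule ext) (rule e0)
  show ?thesis
    apply (rule vec_has_derivative)+
    apply (simp only: e)
    using assms unfolding has_field_derivative_def by blast
qed

lemma herm_adj_add: "herm_adj (X + Y) = herm_adj X + herm_adj Y"
  unfolding mat2_eq by simp

lemma herm_adj_scaleR: "herm_adj (r *\<^sub>R X) = r *\<^sub>R herm_adj X"
  unfolding mat2_eq by (simp del: scaleR_conv_of_real)

lemma herm_conj_has_derivative:
  fixes A M :: "'x::real_normed_vector \<Rightarrow> complex^2^2"
  assumes A: "(A has_derivative (\<lambda>h. A x ** DD h)) (at x within S)"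
      and M: "(M has_derivative M') (at x within S)"
  shows "((\<lambda>y. herm4 (A y ** M y ** herm_adj (A y))) has_derivative
     (\<lambda>h. herm4 (A x ** (DD h ** M x + M' h + M x ** herm_adj (DD h)) ** herm_adj (A x)))) (at x within S)"
proof -
  have AM: "((\<lambda>y. A y ** M y) has_derivative (\<lambda>h. A x ** M' h + (A x ** DD h) ** M x)) (at x within S)"
    using bounded_bilinear.FDERIV[OF bounded_bilinear_mm A M] .
  have Ah: "((\<lambda>y. herm_adj (A y)) has_derivative (\<lambda>h. herm_adj (A x ** DD h))) (at x within S)"
    using bounded_linear.has_derivative[OF bounded_linear_herm_adj A] .
  have P: "((\<lambda>y. A y ** M y ** herm_adj (A y)) has_derivative
     (\<lambda>h. (A x ** M x) ** herm_adj (A x ** DD h) + (A x ** M' h + (A x ** DD h) ** M x) ** herm_adj (A x))) (at x within S)"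
    using bounded_bilinear.FDERIV[OF bounded_bilinear_mm AM Ah] .
  have H: "((\<lambda>y. herm4 (A y ** M y ** herm_adj (A y))) has_derivative
     (\<lambda>h. herm4 ((A x ** M x) ** herm_adj (A x ** DD h) + (A x ** M' h + (A x ** DD h) ** M x) ** herm_adj (A x)))) (at x within S)"
    using bounded_linear.has_derivative[OF bounded_linear_herm4 P] .
  show ?thesis
    apply (rule has_derivative_eq_rhs[OF H])
    apply (rule ext)
    apply (simp add: herm_adj_mult matrix_mul_assoc matrix_add_ldistrib mm_add_left herm4_add algebra_simps)
    done
qed

lemma curve_Tm_deriv:
  fixes B :: "real \<Rightarrow> complex^2^2" and m :: "real \<Rightarrow> real^4"
  assumes B: "(B has_vector_derivative B t ** Dmat a b) (at t)"
      and m: "(m has_vector_derivative m') (at t)"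
  shows "((\<lambda>r. Tm (B r) (m r)) has_vector_derivative
          Tm (B t) (herm4 (Dmat a b ** hm (m t) + hm (m t) ** herm_adj (Dmat a b)) + m')) (at t)"
proof -
  have B': "(B has_derivative (\<lambda>h. B t ** (h *\<^sub>R Dmat a b))) (at t)"
    using B unfolding has_vector_derivative_def by (simp add: mm_scaleR_right del: scaleR_conv_of_real)
  have M': "((\<lambda>r. hm (m r)) has_derivative (\<lambda>h. h *\<^sub>R hm m')) (at t)"
    using bounded_linear.has_derivative[OF bounded_linear_hm m[unfolded has_vector_derivative_def]]
    by (simp add: hm_scaleR del: scaleR_conv_of_real)
  have D: "((\<lambda>r. herm4 (B r ** hm (m r) ** herm_adj (B r))) has_derivative
     (\<lambda>h. herm4 (B t ** ((h *\<^sub>R Dmat a b) ** hm (m t) + h *\<^sub>R hm m' + hm (m t) ** herm_adj (h *\<^sub>R Dmat a b)) ** herm_adj (B t)))) (at t)"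
    by (rule herm_conj_has_derivative[OF B' M'])
  let ?K = "Dmat a b ** hm (m t) + hm (m t) ** herm_adj (Dmat a b)"
  have hK: "hm (herm4 ?K + m') = ?K + hm m'"
    by (simp add: hm_add hm_herm4[OF frame_second_herm])
  have eq: "(h *\<^sub>R Dmat a b) ** hm (m t) + h *\<^sub>R hm m' + hm (m t) ** herm_adj (h *\<^sub>R Dmat a b)
      = h *\<^sub>R (?K + hm m')" for h
    by (simp add: herm_adj_scaleR mm_scaleR_left mm_scaleR_right algebra_simps del: scaleR_conv_of_real)
  show ?thesis
    unfolding has_vector_derivative_def Tm_def
    apply (rule has_derivative_eq_rhs[OF D])
    apply (rule ext)
    apply (subst eq)
    apply (simp only: hK mm_scaleR_left mm_scaleR_right herm4_scaleR)
    done
qed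


lemma Wf_add: "Wf s a b (v + w) = Wf s a b v + Wf s a b w"
  by (simp add: Wf_def algebra_simps)

lemma Wf_scale: "Wf s a b (complex_of_real r * v) = complex_of_real r * Wf s a b v"
  by (simp add: Wf_def algebra_simps)

lemma Wf_diff: "Wf s a b (v - w) = Wf s a b v - Wf s a b w"
  by (simp add: Wf_def algebra_simps)

lemma Wf_1: "Wf s a b v = Wf s (a * v) (b * v) 1"
  by (simp add: Wf_def)

lemma Wf_zero_mod:
  assumes "s^2 = 1" "Wf s a b v = 0" "v \<noteq> 0"
  shows "cmod a = cmod b"
proof -
  have "complex_of_real s * a * v = - cnj (b * v)" using assms(2) by (simp add: Wf_def add_eq_0_iff)
  then have "cmod (complex_of_real s * a * v) = cmod (b * v)" by (metis complex_mod_cnj norm_minus_cancel)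
  moreover have "\<bar>s\<bar> = 1" using assms(1) by (simp add: power2_eq_1_iff abs_if) (use assms(1) in \<open>auto simp: power2_eq_1_iff\<close>)
  ultimately have "cmod a * cmod v = cmod b * cmod v" by (simp add: norm_mult)
  then show ?thesis using assms(3) by simp
qed

lemma Wf_exists_zero:
  assumes "s^2 = 1" "cmod a = cmod b" "a \<noteq> 0"
  shows "\<exists>v. v \<noteq> 0 \<and> Wf s a b v = 0"
proof -
  have s0: "s \<noteq> 0" using assms(1) by auto
  define q where "q = - cnj b / (complex_of_real s * a)"
  define v where "v = csqrt q"
  have b0: "b \<noteq> 0" by (metis assms(2) assms(3) norm_eq_zero)
  have abss: "\<bar>s\<bar> = 1" using assms(1) by (auto simp: power2_eq_1_iff)
  have "cmod q = 1" unfolding q_def using assms abss s0 b0 by (simp add: norm_divide norm_mult)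
  then have vv: "v * cnj v = 1"
    unfolding v_def using complex_norm_square[of "csqrt q"]
    by (metis norm_csqrt of_real_1 one_power2 real_sqrt_one)
  have v2: "v^2 = q" unfolding v_def by simp
  have "v \<noteq> 0" using vv by auto
  moreover have "Wf s a b v = 0"
  proof -
    have cb: "cnj b = - q * complex_of_real s * a" unfolding q_def using s0 assms(3) by (simp add: field_simps)
    have "Wf s a b v = complex_of_real s * a * v + cnj b * cnj v" by (simp add: Wf_def)
    also have "\<dots> = complex_of_real s * a * (v - v^2 * cnj v)" unfolding cb v2[symmetric] by (simp add: algebra_simps)
    also have "v^2 * cnj v = v" using vv by (simp add: power2_eq_square mult.assoc)
    finally show ?thesis by simp
  qed
  ultimately show ?thesis by blast
qed

lemma crs_Wf: "crs (Wf s a b v1) (Wf s a b v2) = (s^2 * (cmod a)^2 - (cmod b)^2) * crs v1 v2"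
  unfolding crs_def Wf_def cmod_power2 by (simp add: power2_eq_square algebra_simps)

lemma crs_Wf_rank1:
  assumes "s^2 = 1" "cmod a = cmod b"
  shows "crs (Wf s a b v1) (Wf s a b v2) = 0"
  using assms by (simp add: crs_Wf)

lemma crs_self [simp]: "crs a a = 0" by (simp add: crs_def)
lemma crs_anti: "crs a b = - crs b a" by (simp add: crs_def)
lemma dotc_self_pos: "a \<noteq> 0 \<Longrightarrow> dotc a a > 0"
  by (simp add: dotc_def complex_eq_iff sum_power2_gt_zero_iff power2_eq_square[symmetric])

lemma crs_par_id: "complex_of_real (dotc a a) * b - complex_of_real (dotc a b) * a = complex_of_real (crs a b) * (\<i> * a)"
  by (simp add: complex_eq_iff dotc_def crs_def algebra_simps)

lemma crs_zero_par:
  assumes "crs a b = 0" "a \<noteq> 0"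
  shows "b = complex_of_real (dotc a b / dotc a a) * a"
proof -
  have d: "dotc a a \<noteq> 0" using dotc_self_pos[OF assms(2)] by simp
  have "complex_of_real (dotc a a) * b = complex_of_real (dotc a b) * a"
    using crs_par_id[of a b] assms(1) by simp
  then show ?thesis using d by (simp add: field_simps)
qed

lemma basis_decomp:
  assumes "crs k v \<noteq> 0"
  shows "w = complex_of_real (crs w v / crs k v) * k + complex_of_real (crs k w / crs k v) * v"
proof -
  have "complex_of_real (crs k v) * w = complex_of_real (crs w v) * k + complex_of_real (crs k w) * v"
    by (simp add: complex_eq_iff crs_def algebra_simps)
  then show ?thesis using assms by (simp add: field_simps)
qed

lemma par_iff:
  assumes "w \<noteq> 0"
  shows "(\<exists>x y::real. (x, y) \<noteq> (0, 0) \<and> complex_of_real x * w + complex_of_real y * u = 0) \<longleftrightarrow> crs w u = 0"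
proof
  assume "\<exists>x y::real. (x, y) \<noteq> (0, 0) \<and> complex_of_real x * w + complex_of_real y * u = 0"
  then obtain x y :: real where xy: "(x, y) \<noteq> (0, 0)" "complex_of_real x * w + complex_of_real y * u = 0" by blast
  have "crs w (complex_of_real x * w + complex_of_real y * u) = y * crs w u"
    by (simp add: crs_def algebra_simps)
  moreover have "crs u (complex_of_real x * w + complex_of_real y * u) = - x * crs w u"
    by (simp add: crs_def algebra_simps)
  ultimately have "y * crs w u = 0" "x * crs w u = 0" using xy(2) by (simp_all add: crs_def)
  then show "crs w u = 0" using xy(1) by auto
next
  assume "crs w u = 0"
  then have "u = complex_of_real (dotc w u / dotc w w) * w" using crs_zero_par assms by blast
  then have "complex_of_real (dotc w u / dotc w w) * w + complex_of_real (-1) * u = 0" by simp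
  then show "\<exists>x y::real. (x, y) \<noteq> (0, 0) \<and> complex_of_real x * w + complex_of_real y * u = 0"
    by (intro exI[of _ "dotc w u / dotc w w"] exI[of _ "-1"]) simp
qed

lemma Wf_kernel:
  assumes "Wf s a b k = 0" "Wf s a b v = 0" "Wf s a b w \<noteq> 0" "k \<noteq> 0"
  shows "\<exists>\<kappa>. v = complex_of_real \<kappa> * k"
proof (cases "crs k v = 0")
  case True
  then show ?thesis using crs_zero_par[OF True assms(4)] by blast
next
  case False
  have "Wf s a b w = complex_of_real (crs w v / crs k v) * Wf s a b k + complex_of_real (crs k w / crs k v) * Wf s a b v"
    by (subst basis_decomp[OF False, of w]) (simp only: Wf_add Wf_scale)
  then show ?thesis using assms by simp
qed

lemma dotc_crs_id: "dotc u c * dotc w w - dotc u w * dotc w c = crs w u * crs w c"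
  by (simp add: dotc_def crs_def algebra_simps)

lemma gram_Tm: "cmod (det B) = 1 \<Longrightarrow> gram (Tm B x) (Tm B y) = gram x y"
  by (simp add: gram_def lor_Tm)

lemma alg_ratio:
  fixes k cr N L Q1 Q2 :: real
  assumes "cr \<noteq> 0" "N \<noteq> 0"
  shows "k * (cr * Q1) / cr^2 - k * (cr * Q2) * L / (N * cr^2) = k * (Q1 * N - Q2 * L) / (cr * N)"
  using assms by (simp add: field_simps power2_eq_square)

lemma torsion_alg:
  assumes dB: "cmod (det B) = 1" and w: "w \<noteq> 0" and wc: "crs w c \<noteq> 0"
    and Q1: "Qs s Y1 = - dotc u c" and Q2: "Qs s Y2 = - dotc u w"
  shows "(det4 (Tm B (es s)) (Tm B (od w)) (Tm B (od c)) (Tm B Y1) / gram (Tm B (od w)) (Tm B (od c))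
        - det4 (Tm B (es s)) (Tm B (od w)) (Tm B (od c)) (Tm B Y2) * lor (Tm B (od w)) (Tm B (od c))
          / (lor (Tm B (od w)) (Tm B (od w)) * gram (Tm B (od w)) (Tm B (od c))) = 0) \<longleftrightarrow> crs w u = 0"
proof -
  have "det B \<noteq> 0" using dB by auto
  then obtain k where k: "k \<noteq> 0" "\<And>a b c d. det4 (Tm B a) (Tm B b) (Tm B c) (Tm B d) = k * det4 a b c d"
    using det4_Tm by blast
  have ww: "dotc w w > 0" using dotc_self_pos[OF w] .
  have d1: "det4 (Tm B (es s)) (Tm B (od w)) (Tm B (od c)) (Tm B Y1) = k * (crs w c * Qs s Y1)"
    by (simp only: k det4_frame)
  have d2: "det4 (Tm B (es s)) (Tm B (od w)) (Tm B (od c)) (Tm B Y2) = k * (crs w c * Qs s Y2)"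
    by (simp only: k det4_frame)
  have g: "gram (Tm B (od w)) (Tm B (od c)) = (crs w c)^2"
    by (simp only: gram_Tm[OF dB] gram_od)
  have l: "lor (Tm B (od w)) (Tm B (od c)) = dotc w c" by (simp add: lor_Tm dB lor_od)
  have n: "lor (Tm B (od w)) (Tm B (od w)) = dotc w w" by (simp add: lor_Tm dB lor_od)
  have "dotc u c * dotc w w - dotc u w * dotc w c = crs w u * crs w c" by (rule dotc_crs_id)
  then have e: "Qs s Y1 * dotc w w - Qs s Y2 * dotc w c = - (crs w u * crs w c)"
    unfolding Q1 Q2 by simp
  have "det4 (Tm B (es s)) (Tm B (od w)) (Tm B (od c)) (Tm B Y1) / gram (Tm B (od w)) (Tm B (od c))
        - det4 (Tm B (es s)) (Tm B (od w)) (Tm B (od c)) (Tm B Y2) * lor (Tm B (od w)) (Tm B (od c))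
          / (lor (Tm B (od w)) (Tm B (od w)) * gram (Tm B (od w)) (Tm B (od c)))
       = k * (Qs s Y1 * dotc w w - Qs s Y2 * dotc w c) / (crs w c * dotc w w)"
    unfolding d1 d2 g l n using alg_ratio[OF wc] ww by simp
  also have "\<dots> = - (k * crs w u * crs w c) / (crs w c * dotc w w)"
    unfolding e by simp
  finally show ?thesis using k ww wc by simp
qed


lemma deriv_unique_open:
  assumes "(f has_derivative f1) (at x)" "(g has_derivative g1) (at x)" "open S" "x \<in> S"
    "\<And>y. y \<in> S \<Longrightarrow> f y = g y"
  shows "f1 = g1"
proof -
  have "(g has_derivative f1) (at x)"
    using has_derivative_transform_within_open[OF assms(1) assms(3) assms(4)] assms(5) by blast
  then show ?thesis using has_derivative_unique assms(2) by blast
qed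

lemma cinf_has_derivative:
  assumes "cinf_on S f" "x \<in> S"
  shows "(f has_derivative frechet_derivative f (at x)) (at x)"
proof -
  have "dd [] f differentiable (at x)" using assms unfolding cinf_on_def by blast
  then show ?thesis by (simp add: frechet_derivative_works)
qed

lemma cinf_dd1:
  assumes "cinf_on S f" "x \<in> S"
  shows "(\<lambda>y. frechet_derivative f (at y) v) differentiable (at x)"
proof -
  have "dd [v] f differentiable (at x)" using assms unfolding cinf_on_def by blast
  then show ?thesis by simp
qed

lemma local_diffeo_facts:
  fixes \<phi> :: "'a::real_normed_vector \<Rightarrow> 'a"
  assumes "local_diffeo V \<phi>"
  defines "\<psi> \<equiv> inv_into V \<phi>"
  shows "open V" "open (\<phi> ` V)"
    "\<And>x. x \<in> V \<Longrightarrow> \<psi> (\<phi> x) = x"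
    "\<And>y. y \<in> \<phi> ` V \<Longrightarrow> \<phi> (\<psi> y) = y"
    "\<And>y. y \<in> \<phi> ` V \<Longrightarrow> \<psi> y \<in> V"
    "\<And>x. x \<in> V \<Longrightarrow> (\<phi> has_derivative frechet_derivative \<phi> (at x)) (at x)"
    "\<And>y. y \<in> \<phi> ` V \<Longrightarrow> (\<psi> has_derivative frechet_derivative \<psi> (at y)) (at y)"
    "\<And>x v. x \<in> V \<Longrightarrow> frechet_derivative \<psi> (at (\<phi> x)) (frechet_derivative \<phi> (at x) v) = v"
    "\<And>y v. y \<in> \<phi> ` V \<Longrightarrow> frechet_derivative \<phi> (at (\<psi> y)) (frechet_derivative \<psi> (at y) v) = v"
proof -
  note ld = assms(1)[unfolded local_diffeo_def]
  show oV: "open V" and oW: "open (\<phi> ` V)" using ld by auto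
  show pp: "\<And>x. x \<in> V \<Longrightarrow> \<psi> (\<phi> x) = x" unfolding \<psi>_def using ld by (simp add: inv_into_f_f)
  show qq: "\<And>y. y \<in> \<phi> ` V \<Longrightarrow> \<phi> (\<psi> y) = y" unfolding \<psi>_def by (simp add: f_inv_into_f)
  show inV: "\<And>y. y \<in> \<phi> ` V \<Longrightarrow> \<psi> y \<in> V" unfolding \<psi>_def by (simp add: inv_into_into)
  show dphi: "\<And>x. x \<in> V \<Longrightarrow> (\<phi> has_derivative frechet_derivative \<phi> (at x)) (at x)"
    using ld cinf_has_derivative by blast
  show dpsi: "\<And>y. y \<in> \<phi> ` V \<Longrightarrow> (\<psi> has_derivative frechet_derivative \<psi> (at y)) (at y)"
    using ld cinf_has_derivative unfolding \<psi>_def by blast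
  show "frechet_derivative \<psi> (at (\<phi> x)) (frechet_derivative \<phi> (at x) v) = v" if x: "x \<in> V" for x v
  proof -
    have "(\<psi> \<circ> \<phi> has_derivative frechet_derivative \<psi> (at (\<phi> x)) \<circ> frechet_derivative \<phi> (at x)) (at x)"
      using diff_chain_at[OF dphi[OF x] dpsi] x by blast
    moreover have "((\<lambda>x. x) has_derivative (\<lambda>x. x)) (at x)" by (rule has_derivative_ident)
    ultimately have "frechet_derivative \<psi> (at (\<phi> x)) \<circ> frechet_derivative \<phi> (at x) = (\<lambda>x. x)"
      using deriv_unique_open[OF _ _ oV x, of "\<psi> \<circ> \<phi>" _ "\<lambda>x. x"] pp by auto
    then show ?thesis by (metis comp_apply)
  qed
  show "frechet_derivative \<phi> (at (\<psi> y)) (frechet_derivative \<psi> (at y) v) = v" if y: "y \<in> \<phi> ` V" for y v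
  proof -
    have "(\<phi> \<circ> \<psi> has_derivative frechet_derivative \<phi> (at (\<psi> y)) \<circ> frechet_derivative \<psi> (at y)) (at y)"
      using diff_chain_at[OF dpsi[OF y] dphi[OF inV[OF y]]] by blast
    moreover have "((\<lambda>x. x) has_derivative (\<lambda>x. x)) (at y)" by (rule has_derivative_ident)
    ultimately have "frechet_derivative \<phi> (at (\<psi> y)) \<circ> frechet_derivative \<psi> (at y) = (\<lambda>x. x)"
      using deriv_unique_open[OF _ _ oW y, of "\<phi> \<circ> \<psi>" _ "\<lambda>x. x"] qq by auto
    then show ?thesis by (metis comp_apply)
  qed
qed

definition hc :: "complex \<Rightarrow> real^4" where
  "hc x = vector [Re x, (Im x)^2, (Im x)^3, 0]"

definition dhc :: "complex \<Rightarrow> complex \<Rightarrow> real^4" where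
  "dhc x v = vector [Re v, 2 * Im x * Im v, 3 * (Im x)^2 * Im v, 0]"

lemma hc_deriv: "(hc has_derivative dhc x) (at x)"
proof (rule vec_has_derivative)
  fix i :: 4
  have i1: "((\<lambda>y. Re y) has_derivative (\<lambda>h. Re h)) (at x)"
    using has_derivative_Re[OF has_derivative_ident] .
  have i2: "((\<lambda>y. (Im y)^2) has_derivative (\<lambda>h. 2 * Im x * Im h)) (at x)"
    using has_derivative_power[OF has_derivative_Im[OF has_derivative_ident], of 2]
    by (rule has_derivative_eq_rhs) (simp add: fun_eq_iff)
  have i3: "((\<lambda>y. (Im y)^3) has_derivative (\<lambda>h. 3 * (Im x)^2 * Im h)) (at x)"
    using has_derivative_power[OF has_derivative_Im[OF has_derivative_ident], of 3]
    by (rule has_derivative_eq_rhs) (simp add: fun_eq_iff)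
  have i4: "((\<lambda>y. 0::real) has_derivative (\<lambda>h. 0)) (at x)" by (rule has_derivative_const)
  have "i = 1 \<or> i = 2 \<or> i = 3 \<or> i = 4" by (rule exhaust_4)
  then show "((\<lambda>y. hc y $ i) has_derivative (\<lambda>h. dhc x h $ i)) (at x)"
    using i1 i2 i3 i4 by (auto simp: hc_def dhc_def)
qed

lemma linear_dhc: "linear (dhc x)"
  by (rule linearI) (simp_all add: dhc_def vec4_eq algebra_simps)

lemma dhc_0_i: "dhc 0 \<i> = 0"
  by (simp add: dhc_def vec4_eq)

lemma dhc_0: "dhc 0 a = vector [Re a, 0, 0, 0]"
  by (simp add: dhc_def vec4_eq)

lemma dhc_inj: "Im x \<noteq> 0 \<Longrightarrow> dhc x a = 0 \<Longrightarrow> a = 0"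
  by (simp add: dhc_def vec4_eq complex_eq_iff)

lemma dhc_i_r: "dhc (complex_of_real r * \<i>) \<i> = vector [0, 2 * r, 3 * r^2, 0]"
  by (simp add: dhc_def vec4_eq)

lemma hc_i_r: "hc (complex_of_real r * \<i>) = vector [0, r^2, r^3, 0]"
  by (simp add: hc_def vec4_eq)

lemma vec_0ab0: "(vector [0, a, b, 0] :: real^4) = a *\<^sub>R axis 2 1 + b *\<^sub>R axis 3 1"
  by (simp add: vec4_eq axis_def)

lemma linear_fd:
  assumes "(f has_derivative f') (at x)"
  shows "linear f'"
  using assms has_derivative_linear by blast

lemma cusp_analysis:
  fixes F :: "complex \<Rightarrow> real^4" and dF :: "complex \<Rightarrow> complex \<Rightarrow> real^4"
  assumes U: "open U"
    and dF: "\<And>z. z \<in> U \<Longrightarrow> (F has_derivative dF z) (at z)"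
    and ce: "cusp_edge U F p"
    and \<epsilon>: "\<epsilon> > 0" and g0: "\<gamma> 0 = p" and g1: "(\<gamma> has_vector_derivative \<gamma>1) (at 0)" and g1nz: "\<gamma>1 \<noteq> 0"
    and gs: "\<And>t. t \<in> {-\<epsilon><..<\<epsilon>} \<Longrightarrow> \<gamma> t \<in> sing_set U F"
  shows "dF p \<gamma>1 \<noteq> 0 \<and>
    (\<exists>\<sigma> \<tau> \<sigma>2 \<delta>2 G2. \<delta>2 > 0 \<and> \<sigma> 0 = p \<and>
       (\<forall>r. \<bar>r\<bar> < \<delta>2 \<longrightarrow> \<sigma> r \<in> U \<and> (\<sigma> has_vector_derivative \<tau> r) (at r)) \<and>
       (\<tau> has_vector_derivative \<sigma>2) (at 0) \<and> \<tau> 0 \<noteq> 0 \<and> dF p (\<tau> 0) = 0 \<and>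
       ((\<lambda>r. dF (\<sigma> r) (\<tau> r)) has_vector_derivative G2) (at 0) \<and> (\<forall>\<mu>. G2 \<noteq> \<mu> *\<^sub>R dF p \<gamma>1))"
proof -
  from ce obtain V \<phi> W \<Phi> where pU: "p \<in> U" and V0: "0 \<in> V" and ldV: "local_diffeo V \<phi>" and phi0: "\<phi> 0 = p"
    and phiU: "\<phi> ` V \<subseteq> U" and FpW: "F p \<in> W" and ldW: "local_diffeo W \<Phi>" and FW: "F ` (\<phi> ` V) \<subseteq> W"
    and eqn: "\<forall>x\<in>V. \<Phi> (F (\<phi> x)) = vector [Re x, (Im x)^2, (Im x)^3, 0]"
    unfolding cusp_edge_def by blast
  define \<psi> where "\<psi> = inv_into V \<phi>"
  define \<Psi> where "\<Psi> = inv_into W \<Phi>"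
  define d\<phi> where "d\<phi> x = frechet_derivative \<phi> (at x)" for x
  define d\<psi> where "d\<psi> y = frechet_derivative \<psi> (at y)" for y
  define d\<Psi> where "d\<Psi> y = frechet_derivative \<Psi> (at y)" for y
  note V = local_diffeo_facts[OF ldV, folded \<psi>_def]
  note W = local_diffeo_facts[OF ldW, folded \<Psi>_def]
  have hcW: "hc x \<in> \<Phi> ` W" if "x \<in> V" for x
    using eqn that FW unfolding hc_def by (metis image_eqI image_subset_iff)
  have FPsi: "F (\<phi> x) = \<Psi> (hc x)" if "x \<in> V" for x
  proof -
    have "\<Psi> (hc x) = \<Psi> (\<Phi> (F (\<phi> x)))" using eqn that unfolding hc_def by simp
    also have "\<dots> = F (\<phi> x)" using W(3) FW that by blast
    finally show ?thesis by simp
  qed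
  have dphiD: "(\<phi> has_derivative d\<phi> x) (at x)" if "x \<in> V" for x using V(6) that unfolding d\<phi>_def by blast
  have dpsiD: "(\<psi> has_derivative d\<psi> y) (at y)" if "y \<in> \<phi> ` V" for y using V(7) that unfolding d\<psi>_def by blast
  have dPsiD: "(\<Psi> has_derivative d\<Psi> y) (at y)" if "y \<in> \<Phi> ` W" for y using W(7) that unfolding d\<Psi>_def by blast
  have lin_dphi: "linear (d\<phi> x)" if "x \<in> V" for x using linear_fd[OF dphiD[OF that]] .
  have lin_dpsi: "linear (d\<psi> y)" if "y \<in> \<phi> ` V" for y using linear_fd[OF dpsiD[OF that]] .
  have lin_dPsi: "linear (d\<Psi> y)" if "y \<in> \<Phi> ` W" for y using linear_fd[OF dPsiD[OF that]] .
  have lin_dF: "linear (dF z)" if "z \<in> U" for z using linear_fd[OF dF[OF that]] .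
  have dPsi_inj: "v = 0" if "y \<in> \<Phi> ` W" "d\<Psi> y v = 0" for y v
  proof -
    have "frechet_derivative \<Phi> (at (\<Psi> y)) (d\<Psi> y v) = v" using W(9)[OF that(1)] unfolding d\<Psi>_def .
    then show ?thesis using that(2) linear_0[OF linear_fd[OF W(6)[OF W(5)[OF that(1)]]]] by simp
  qed
  have chain: "dF (\<phi> x) (d\<phi> x a) = d\<Psi> (hc x) (dhc x a)" if x: "x \<in> V" for x a
  proof -
    have "\<phi> x \<in> U" using phiU x by blast
    have d1: "(F \<circ> \<phi> has_derivative dF (\<phi> x) \<circ> d\<phi> x) (at x)"
      using diff_chain_at[OF dphiD[OF x] dF[OF \<open>\<phi> x \<in> U\<close>]] .
    have d2: "(\<Psi> \<circ> hc has_derivative d\<Psi> (hc x) \<circ> dhc x) (at x)"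
      using diff_chain_at[OF hc_deriv dPsiD[OF hcW[OF x]]] .
    have "dF (\<phi> x) \<circ> d\<phi> x = d\<Psi> (hc x) \<circ> dhc x"
      using deriv_unique_open[OF d1 d2 V(1) x] FPsi by auto
    then show ?thesis by (metis comp_apply)
  qed
  have psi_p: "\<psi> p = 0" using V(3)[OF V0] phi0 by simp
  have pphiV: "p \<in> \<phi> ` V" using V0 phi0 by blast
  have N0: "inj (dF (\<phi> x))" if x: "x \<in> V" and im: "Im x \<noteq> 0" for x
  proof -
    have "\<phi> x \<in> U" using phiU x by blast
    have "v = 0" if v: "dF (\<phi> x) v = 0" for v
    proof -
      have y: "\<phi> x \<in> \<phi> ` V" using x by blast
      define a where "a = d\<psi> (\<phi> x) v"
      have va: "d\<phi> x a = v" using V(9)[OF y, of v] V(3)[OF x] unfolding a_def d\<phi>_def d\<psi>_def by simp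
      have "d\<Psi> (hc x) (dhc x a) = 0" using chain[OF x, of a] va v by simp
      then have "dhc x a = 0" using dPsi_inj hcW[OF x] by blast
      then have "a = 0" using dhc_inj im by blast
      then show "v = 0" using va linear_0[OF lin_dphi[OF x]] by simp
    qed
    then show ?thesis using linear_injective_0[OF lin_dF[OF \<open>\<phi> x \<in> U\<close>]] by blast
  qed
  have gcont: "continuous (at 0) \<gamma>"
    using g1 by (simp add: has_vector_derivative_continuous)
  obtain \<delta> where \<delta>: "\<delta> > 0" "\<And>t. \<bar>t\<bar> < \<delta> \<Longrightarrow> \<gamma> t \<in> \<phi> ` V \<and> t \<in> {-\<epsilon><..<\<epsilon>}"
  proof -
    obtain e1 where e1: "e1 > 0" "\<And>t. dist t 0 < e1 \<Longrightarrow> \<gamma> t \<in> \<phi> ` V"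
      using gcont V(2) pphiV g0 unfolding continuous_at_eps_delta
      by (metis open_dist dist_commute)
    show ?thesis
      apply (rule that[of "min e1 \<epsilon>"])
      using e1 \<epsilon> by (auto simp: dist_real_def)
  qed
  define a where "a = d\<psi> p \<gamma>1"
  have a1: "d\<phi> 0 a = \<gamma>1" using V(9)[OF pphiV, of \<gamma>1] psi_p unfolding a_def d\<phi>_def d\<psi>_def by simp
  have Ima: "Im a = 0"
  proof -
    have dx: "((\<lambda>t. Im (\<psi> (\<gamma> t))) has_derivative (\<lambda>h. Im (d\<psi> p (h *\<^sub>R \<gamma>1)))) (at 0)"
    proof -
      have "((\<psi> \<circ> \<gamma>) has_derivative d\<psi> p \<circ> (\<lambda>h. h *\<^sub>R \<gamma>1)) (at 0)"
        using diff_chain_at[OF g1[unfolded has_vector_derivative_def] dpsiD] pphiV g0 by simp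
      from has_derivative_Im[OF this] show ?thesis by (simp add: o_def)
    qed
    have zero: "Im (\<psi> (\<gamma> t)) = 0" if "t \<in> ball 0 \<delta>" for t
    proof -
      have t: "\<bar>t\<bar> < \<delta>" using that by (simp add: dist_real_def)
      have y: "\<gamma> t \<in> \<phi> ` V" using \<delta>(2)[OF t] by blast
      have x: "\<psi> (\<gamma> t) \<in> V" using V(5)[OF y] .
      have "\<gamma> t \<in> sing_set U F" using gs \<delta>(2)[OF t] by blast
      then have ni: "\<not> inj (frechet_derivative F (at (\<gamma> t)))" unfolding sing_set_def by blast
      have "\<gamma> t \<in> U" using phiU y by blast
      then have "frechet_derivative F (at (\<gamma> t)) = dF (\<gamma> t)" using dF frechet_derivative_at by metis
      with ni have "\<not> inj (dF (\<phi> (\<psi> (\<gamma> t))))" using V(4)[OF y] by simp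
      then show ?thesis using N0[OF x] by blast
    qed
    have c: "((\<lambda>t::real. 0::real) has_derivative (\<lambda>h. 0)) (at 0)" by (rule has_derivative_const)
    have "((\<lambda>t. Im (\<psi> (\<gamma> t))) has_derivative (\<lambda>h. 0)) (at 0)"
      using has_derivative_transform_within_open[OF c open_ball, of 0 \<delta> "\<lambda>t. Im (\<psi> (\<gamma> t))"]
        zero \<delta>(1) by auto
    then have "(\<lambda>h. Im (d\<psi> p (h *\<^sub>R \<gamma>1))) = (\<lambda>h. 0)" using dx has_derivative_unique by blast
    then have "Im (d\<psi> p (1 *\<^sub>R \<gamma>1)) = 0" by metis
    then show ?thesis unfolding a_def by simp
  qed
  have dFg1: "dF p \<gamma>1 = d\<Psi> (hc 0) (vector [Re a, 0, 0, 0])"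
    using chain[OF V0, of a] a1 phi0 by (simp add: dhc_0)
  have N1: "dF p \<gamma>1 \<noteq> 0"
  proof
    assume "dF p \<gamma>1 = 0"
    then have "vector [Re a, 0, 0, 0] = (0::real^4)" using dFg1 dPsi_inj hcW[OF V0] by metis
    then have "Re a = 0" by (simp add: vec4_eq)
    then have "a = 0" using Ima by (simp add: complex_eq_iff)
    then show False using a1 linear_0[OF lin_dphi[OF V0]] g1nz by simp
  qed
  obtain \<delta>2 where \<delta>2: "\<delta>2 > 0" "ball 0 \<delta>2 \<subseteq> V" using V(1) V0 open_contains_ball by blast
  have iV: "complex_of_real r * \<i> \<in> V" if "\<bar>r\<bar> < \<delta>2" for r
    using \<delta>2(2) that by (auto simp: dist_norm norm_mult)
  define \<sigma> where "\<sigma> r = \<phi> (complex_of_real r * \<i>)" for r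
  define \<tau> where "\<tau> r = d\<phi> (complex_of_real r * \<i>) \<i>" for r
  have lin_i: "((\<lambda>r. complex_of_real r * \<i>) has_derivative (\<lambda>h. h *\<^sub>R \<i>)) (at r)" for r
    by (auto intro!: derivative_eq_intros simp: scaleR_conv_of_real)
  have sig_d: "(\<sigma> has_vector_derivative \<tau> r) (at r)" if r: "\<bar>r\<bar> < \<delta>2" for r
  proof -
    have "(\<phi> \<circ> (\<lambda>r. complex_of_real r * \<i>) has_derivative d\<phi> (complex_of_real r * \<i>) \<circ> (\<lambda>h. h *\<^sub>R \<i>)) (at r)"
      using diff_chain_at[OF lin_i dphiD[OF iV[OF r]]] .
    moreover have "d\<phi> (complex_of_real r * \<i>) \<circ> (\<lambda>h. h *\<^sub>R \<i>) = (\<lambda>h. h *\<^sub>R \<tau> r)"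
      unfolding \<tau>_def using linear_cmul[OF lin_dphi[OF iV[OF r]]] by (auto simp: o_def)
    ultimately show ?thesis unfolding has_vector_derivative_def \<sigma>_def by (simp add: o_def)
  qed
  have tau_diff: "\<tau> differentiable (at 0)"
  proof -
    have "(\<lambda>y. frechet_derivative \<phi> (at y) \<i>) differentiable (at (complex_of_real 0 * \<i>))"
      using cinf_dd1[of V \<phi> 0 \<i>] ldV V0 unfolding local_diffeo_def by simp
    then have "(\<lambda>y. frechet_derivative \<phi> (at y) \<i>) \<circ> (\<lambda>r. complex_of_real r * \<i>) differentiable (at 0)"
      using differentiable_chain_at[of "\<lambda>r. complex_of_real r * \<i>" 0] lin_i differentiableI by blast
    then show ?thesis unfolding \<tau>_def d\<phi>_def o_def .
  qed
  then obtain \<sigma>2 where sig2: "(\<tau> has_vector_derivative \<sigma>2) (at 0)"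
    using vector_derivative_works by blast
  have tau0: "\<tau> 0 = d\<phi> 0 \<i>" unfolding \<tau>_def by simp
  have tau0nz: "\<tau> 0 \<noteq> 0"
  proof
    assume "\<tau> 0 = 0"
    then have "d\<psi> p (d\<phi> 0 \<i>) = 0" using tau0 linear_0[OF lin_dpsi[OF pphiV]] by simp
    moreover have "d\<psi> p (d\<phi> 0 \<i>) = \<i>" using V(8)[OF V0, of \<i>] phi0 unfolding d\<phi>_def d\<psi>_def by simp
    ultimately show False by simp
  qed
  have dFtau0: "dF p (\<tau> 0) = 0"
    using chain[OF V0, of \<i>] phi0 tau0 dhc_0_i linear_0[OF lin_dPsi[OF hcW[OF V0]]] by simp
  define \<Psi>2 where "\<Psi>2 y = d\<Psi> y (axis 2 1)" for y
  define \<Psi>3 where "\<Psi>3 y = d\<Psi> y (axis 3 1)" for y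
  define kk where "kk r = (vector [0, r^2, r^3, 0] :: real^4)" for r
  have Geq: "dF (\<sigma> r) (\<tau> r) = (2 * r) *\<^sub>R \<Psi>2 (kk r) + (3 * r^2) *\<^sub>R \<Psi>3 (kk r)"
    if r: "\<bar>r\<bar> < \<delta>2" for r
  proof -
    have "dF (\<sigma> r) (\<tau> r) = d\<Psi> (hc (complex_of_real r * \<i>)) (dhc (complex_of_real r * \<i>) \<i>)"
      unfolding \<sigma>_def \<tau>_def using chain[OF iV[OF r]] .
    also have "\<dots> = d\<Psi> (kk r) ((2 * r) *\<^sub>R axis 2 1 + (3 * r^2) *\<^sub>R axis 3 1)"
      unfolding dhc_i_r hc_i_r kk_def vec_0ab0 ..
    also have "\<dots> = (2 * r) *\<^sub>R \<Psi>2 (kk r) + (3 * r^2) *\<^sub>R \<Psi>3 (kk r)"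
      using lin_dPsi[OF hcW[OF iV[OF r]]] unfolding \<Psi>2_def \<Psi>3_def hc_i_r kk_def[symmetric]
      by (simp add: linear_add linear_cmul)
    finally show ?thesis .
  qed
  have kk0: "kk 0 = hc 0" by (simp add: kk_def hc_def vec4_eq)
  have kkd: "kk differentiable (at 0)"
  proof -
    have "kk = (\<lambda>r. (r^2) *\<^sub>R axis 2 1 + (r^3) *\<^sub>R axis 3 1)"
      by (simp add: fun_eq_iff kk_def vec_0ab0)
    then show ?thesis by (auto intro!: derivative_intros)
  qed
  have P2d: "(\<Psi>2 \<circ> kk) differentiable (at 0)"
  proof -
    have "(\<lambda>y. frechet_derivative \<Psi> (at y) (axis 2 1)) differentiable (at (kk 0))"
      using cinf_dd1[of "\<Phi> ` W" \<Psi>] ldW hcW[OF V0] kk0 unfolding local_diffeo_def \<Psi>_def by simp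
    then show ?thesis using differentiable_chain_at[OF kkd] unfolding \<Psi>2_def d\<Psi>_def by blast
  qed
  have P3d: "(\<Psi>3 \<circ> kk) differentiable (at 0)"
  proof -
    have "(\<lambda>y. frechet_derivative \<Psi> (at y) (axis 3 1)) differentiable (at (kk 0))"
      using cinf_dd1[of "\<Phi> ` W" \<Psi>] ldW hcW[OF V0] kk0 unfolding local_diffeo_def \<Psi>_def by simp
    then show ?thesis using differentiable_chain_at[OF kkd] unfolding \<Psi>3_def d\<Psi>_def by blast
  qed
  obtain D2 where D2: "((\<lambda>r. \<Psi>2 (kk r)) has_vector_derivative D2) (at 0)"
    using P2d vector_derivative_works unfolding o_def by blast
  obtain D3 where D3: "((\<lambda>r. \<Psi>3 (kk r)) has_vector_derivative D3) (at 0)"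
    using P3d vector_derivative_works unfolding o_def by blast
  have Gd0: "((\<lambda>r. (2 * r) *\<^sub>R \<Psi>2 (kk r) + (3 * r^2) *\<^sub>R \<Psi>3 (kk r)) has_vector_derivative 2 *\<^sub>R \<Psi>2 (kk 0)) (at 0)"
  proof -
    have "((\<lambda>r. (2 * r) *\<^sub>R \<Psi>2 (kk r) + (3 * r^2) *\<^sub>R \<Psi>3 (kk r)) has_vector_derivative
      ((2 * 0) *\<^sub>R D2 + 2 *\<^sub>R \<Psi>2 (kk 0)) + ((3 * 0^2) *\<^sub>R D3 + (3 * (2 * 0)) *\<^sub>R \<Psi>3 (kk 0))) (at 0)"
      apply (intro has_vector_derivative_add has_vector_derivative_scaleR D2 D3)
      apply (auto intro!: derivative_eq_intros)
      done
    then show ?thesis by simp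
  qed
  have Gd: "((\<lambda>r. dF (\<sigma> r) (\<tau> r)) has_vector_derivative 2 *\<^sub>R \<Psi>2 (kk 0)) (at 0)"
    apply (rule has_vector_derivative_transform_within_open[OF Gd0, of "ball 0 \<delta>2"])
    using \<delta>2(1) Geq by (auto simp: dist_real_def)
  have notpar: "2 *\<^sub>R \<Psi>2 (kk 0) \<noteq> \<mu> *\<^sub>R dF p \<gamma>1" for \<mu>
  proof
    assume eq: "2 *\<^sub>R \<Psi>2 (kk 0) = \<mu> *\<^sub>R dF p \<gamma>1"
    have l: "linear (d\<Psi> (hc 0))" using lin_dPsi[OF hcW[OF V0]] .
    have "d\<Psi> (hc 0) (2 *\<^sub>R axis 2 1 - \<mu> *\<^sub>R vector [Re a, 0, 0, 0]) = 0"
      using eq unfolding \<Psi>2_def kk0 dFg1 by (simp add: linear_diff[OF l] linear_cmul[OF l])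
    then have "2 *\<^sub>R axis 2 1 - \<mu> *\<^sub>R vector [Re a, 0, 0, 0] = (0::real^4)"
      using dPsi_inj hcW[OF V0] by blast
    then show False by (simp add: vec4_eq axis_def)
  qed
  have sigU: "\<sigma> r \<in> U" if "\<bar>r\<bar> < \<delta>2" for r
    unfolding \<sigma>_def using iV[OF that] phiU by blast
  have sig0: "\<sigma> 0 = p" unfolding \<sigma>_def using phi0 by simp
  show ?thesis
    using N1 \<delta>2(1) sig0 sigU sig_d sig2 tau0nz dFtau0 Gd notpar by blast
qed


definition FE :: "(complex \<Rightarrow> complex^2^2) \<Rightarrow> real \<Rightarrow> complex \<Rightarrow> real^4" where
  "FE A s z = Tm (A z) (es s)"

lemma hyp_front_FE: "hyp_front A = FE A 1"
  by (rule ext) (simp add: hyp_front_def FE_def Tm_def hm_es_1)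

lemma ds_front_FE: "ds_front A = FE A (-1)"
  by (rule ext) (simp add: ds_front_def FE_def Tm_def hm_es_m1)

lemma Dmat_scale: "Dmat (a * (complex_of_real h * v)) (b * (complex_of_real h * v)) = h *\<^sub>R Dmat (a * v) (b * v)"
  unfolding mat2_eq by (simp del: scaleR_conv_of_real) (simp add: scaleR_conv_of_real algebra_simps)

lemma bl_differentiable:
  assumes "bounded_linear g" "f differentiable F"
  shows "(\<lambda>x. g (f x)) differentiable F"
  using assms bounded_linear.has_derivative unfolding differentiable_def by blast

lemma differentiable_transform_open:
  assumes "f differentiable (at x)" "open S" "x \<in> S" "\<And>y. y \<in> S \<Longrightarrow> f y = g y"
  shows "g differentiable (at x)"
proof -
  obtain D where "(f has_derivative D) (at x)" using assms(1) unfolding differentiable_def by blast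
  then have "(g has_derivative D) (at x)" using has_derivative_transform_within_open assms(2-4) by blast
  then show ?thesis unfolding differentiable_def by blast
qed

lemma Wf_differentiable:
  assumes "a differentiable (at x within S)" "b differentiable (at x within S)" "v differentiable (at x within S)"
  shows "(\<lambda>x. Wf s (a x) (b x) (v x)) differentiable (at x within S)"
  unfolding Wf_def
  using assms by (intro differentiable_add differentiable_mult differentiable_const
     bl_differentiable[OF bounded_linear_cnj]) auto

lemma crs_add_right: "crs a (b + c) = crs a b + crs a c" by (simp add: crs_def algebra_simps)
lemma crs_scale_right: "crs a (complex_of_real r * b) = r * crs a b" by (simp add: crs_def algebra_simps)
lemma crs_scale_left: "crs (complex_of_real r * a) b = r * crs a b" by (simp add: crs_def algebra_simps)

lemma Wf_scale3: "Wf s (a * (complex_of_real k * e)) (b * (complex_of_real k * e)) (complex_of_real k * e)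
   = complex_of_real (k^2) * Wf s (a * e) (b * e) e"
  by (simp add: Wf_def power2_eq_square algebra_simps)

locale flat =
  fixes U :: "complex set" and \<alpha> \<beta> :: "complex \<Rightarrow> complex" and A :: "complex \<Rightarrow> complex^2^2"
  assumes U: "open U" and hol_a: "\<alpha> holomorphic_on U" and hol_b: "\<beta> holomorphic_on U"
    and nz: "\<forall>z\<in>U. \<alpha> z \<noteq> 0 \<and> \<beta> z \<noteq> 0" and SL: "\<forall>z\<in>U. det (A z) = 1"
    and ode: "\<forall>z\<in>U. \<forall>i j. ((\<lambda>w. A w $ i $ j) has_field_derivative ((A z ** Dmat (\<alpha> z) (\<beta> z)) $ i $ j)) (at z)"
begin

definition dFE :: "real \<Rightarrow> complex \<Rightarrow> complex \<Rightarrow> real^4" where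
  "dFE s z v = Tm (A z) (od (Wf s (\<alpha> z) (\<beta> z) v))"

lemma A_der: "z \<in> U \<Longrightarrow> (A has_derivative (\<lambda>h. A z ** Dmat (\<alpha> z * h) (\<beta> z * h))) (at z)"
  using A_has_derivative ode by blast

lemma a_der: "z \<in> U \<Longrightarrow> (\<alpha> has_field_derivative deriv \<alpha> z) (at z)"
  using holomorphic_derivI[OF hol_a U] by blast

lemma b_der: "z \<in> U \<Longrightarrow> (\<beta> has_field_derivative deriv \<beta> z) (at z)"
  using holomorphic_derivI[OF hol_b U] by blast

lemma da_diff: "z \<in> U \<Longrightarrow> deriv \<alpha> differentiable (at z)"
  using holomorphic_on_imp_differentiable_at[OF holomorphic_deriv[OF hol_a U] U]
  by (simp add: field_differentiable_imp_differentiable)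

lemma db_diff: "z \<in> U \<Longrightarrow> deriv \<beta> differentiable (at z)"
  using holomorphic_on_imp_differentiable_at[OF holomorphic_deriv[OF hol_b U] U]
  by (simp add: field_differentiable_imp_differentiable)

lemma detA: "z \<in> U \<Longrightarrow> det (A z) \<noteq> 0" "z \<in> U \<Longrightarrow> cmod (det (A z)) = 1"
  using SL by auto

lemma FE_der: "z \<in> U \<Longrightarrow> (FE A s has_derivative dFE s z) (at z)"
proof -
  assume z: "z \<in> U"
  have M: "((\<lambda>y. hm (es s)) has_derivative (\<lambda>h. 0)) (at z)" by (rule has_derivative_const)
  have D: "((\<lambda>y. herm4 (A y ** hm (es s) ** herm_adj (A y))) has_derivative
     (\<lambda>h. herm4 (A z ** (Dmat (\<alpha> z * h) (\<beta> z * h) ** hm (es s) + 0 + hm (es s) ** herm_adj (Dmat (\<alpha> z * h) (\<beta> z * h))) ** herm_adj (A z)))) (at z)"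
    by (rule herm_conj_has_derivative[OF A_der[OF z] M])
  show ?thesis
    unfolding FE_def Tm_def[abs_def] dFE_def
    apply (rule has_derivative_eq_rhs[OF D])
    apply (rule ext)
    apply (simp only: add_0_right frame_first)
    apply (simp add: Wf_def mult.assoc)
    done
qed

lemma dFE_scale: "dFE s z (r *\<^sub>R x) = r *\<^sub>R dFE s z x"
proof -
  have "r *\<^sub>R x = complex_of_real r * x" by (simp add: scaleR_conv_of_real)
  then show ?thesis by (simp only: dFE_def Wf_scale od_of_real_mult Tm_scaleR)
qed

lemma dFE_add: "dFE s z (x + y) = dFE s z x + dFE s z y"
  by (simp only: dFE_def Wf_add od_add Tm_add)

lemma linear_dFE: "linear (dFE s z)"
  by (rule linearI) (simp_all only: dFE_add dFE_scale)

lemma FE_fd: "z \<in> U \<Longrightarrow> frechet_derivative (FE A s) (at z) = dFE s z"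
  using FE_der frechet_derivative_at by metis

lemma dFE_eq_0: "z \<in> U \<Longrightarrow> dFE s z v = 0 \<longleftrightarrow> Wf s (\<alpha> z) (\<beta> z) v = 0"
  unfolding dFE_def using Tm_eq_0_iff[OF detA(1)] by simp

lemma sing_iff:
  assumes s: "s^2 = 1"
  shows "z \<in> sing_set U (FE A s) \<longleftrightarrow> z \<in> U \<and> cmod (\<alpha> z) = cmod (\<beta> z)"
proof
  assume "z \<in> sing_set U (FE A s)"
  then have z: "z \<in> U" and ni: "\<not> inj (dFE s z)" unfolding sing_set_def using FE_fd by auto
  then obtain v where "dFE s z v = 0" "v \<noteq> 0" using linear_injective_0[OF linear_dFE] by blast
  then have "Wf s (\<alpha> z) (\<beta> z) v = 0" "v \<noteq> 0" using dFE_eq_0[OF z] by auto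
  then show "z \<in> U \<and> cmod (\<alpha> z) = cmod (\<beta> z)" using Wf_zero_mod[OF s] z by blast
next
  assume h: "z \<in> U \<and> cmod (\<alpha> z) = cmod (\<beta> z)"
  then obtain v where "v \<noteq> 0" "Wf s (\<alpha> z) (\<beta> z) v = 0" using Wf_exists_zero[OF s] nz by blast
  then have "dFE s z v = 0" "v \<noteq> 0" using dFE_eq_0 h by auto
  then have "\<not> inj (dFE s z)" using linear_injective_0[OF linear_dFE] by blast
  then show "z \<in> sing_set U (FE A s)" unfolding sing_set_def using FE_fd h by auto
qed

lemma eta_FE: "z \<in> U \<Longrightarrow> eta_d \<eta> (FE A s) z = Tm (A z) (od (Wf s (\<alpha> z) (\<beta> z) (\<eta> z)))"
  unfolding eta_d_def using FE_fd dFE_def by simp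

definition cc :: "real \<Rightarrow> (complex \<Rightarrow> complex) \<Rightarrow> complex \<Rightarrow> complex" where
  "cc s \<eta> z = Wf s (deriv \<alpha> z * \<eta> z) (deriv \<beta> z * \<eta> z) (\<eta> z) + Wf s (\<alpha> z) (\<beta> z) (frechet_derivative \<eta> (at z) (\<eta> z))"

lemma W_der:
  assumes z: "z \<in> U" and eta: "(\<eta> has_derivative d\<eta>) (at z)"
  shows "((\<lambda>z. Wf s (\<alpha> z) (\<beta> z) (\<eta> z)) has_derivative
     (\<lambda>h. Wf s (deriv \<alpha> z * h) (deriv \<beta> z * h) (\<eta> z) + Wf s (\<alpha> z) (\<beta> z) (d\<eta> h))) (at z)"
proof -
  have a: "(\<alpha> has_derivative (\<lambda>h. deriv \<alpha> z * h)) (at z)" using a_der[OF z] unfolding has_field_derivative_def .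
  have b: "(\<beta> has_derivative (\<lambda>h. deriv \<beta> z * h)) (at z)" using b_der[OF z] unfolding has_field_derivative_def .
  have c: "((\<lambda>z. complex_of_real s) has_derivative (\<lambda>h. 0)) (at z)" by (rule has_derivative_const)
  have D: "((\<lambda>z. complex_of_real s * \<alpha> z * \<eta> z + cnj (\<beta> z * \<eta> z)) has_derivative
      (\<lambda>h. (complex_of_real s * \<alpha> z * d\<eta> h + (complex_of_real s * (deriv \<alpha> z * h) + 0 * \<alpha> z) * \<eta> z)
          + cnj (\<beta> z * d\<eta> h + deriv \<beta> z * h * \<eta> z))) (at z)"
    by (intro has_derivative_add has_derivative_mult has_derivative_cnj a b c eta)
  show ?thesis unfolding Wf_def
    by (rule has_derivative_eq_rhs[OF D]) (simp add: fun_eq_iff algebra_simps)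
qed

lemma etaF_der:
  assumes z: "z \<in> U" and eta: "(\<eta> has_derivative d\<eta>) (at z)" and W0: "Wf s (\<alpha> z) (\<beta> z) (\<eta> z) = 0"
  shows "(eta_d \<eta> (FE A s) has_derivative
     (\<lambda>h. Tm (A z) (od (Wf s (deriv \<alpha> z * h) (deriv \<beta> z * h) (\<eta> z) + Wf s (\<alpha> z) (\<beta> z) (d\<eta> h))))) (at z)"
proof -
  let ?W = "\<lambda>z. Wf s (\<alpha> z) (\<beta> z) (\<eta> z)"
  let ?dW = "\<lambda>h. Wf s (deriv \<alpha> z * h) (deriv \<beta> z * h) (\<eta> z) + Wf s (\<alpha> z) (\<beta> z) (d\<eta> h)"
  have M: "((\<lambda>y. hm (od (?W y))) has_derivative (\<lambda>h. hm (od (?dW h)))) (at z)"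
    using bounded_linear.has_derivative[OF bounded_linear_hm
        bounded_linear.has_derivative[OF bounded_linear_od W_der[OF z eta]]] .
  have D: "((\<lambda>y. herm4 (A y ** hm (od (?W y)) ** herm_adj (A y))) has_derivative
     (\<lambda>h. herm4 (A z ** (Dmat (\<alpha> z * h) (\<beta> z * h) ** hm (od (?W z)) + hm (od (?dW h)) + hm (od (?W z)) ** herm_adj (Dmat (\<alpha> z * h) (\<beta> z * h))) ** herm_adj (A z)))) (at z)"
    by (rule herm_conj_has_derivative[OF A_der[OF z] M])
  have hz: "hm (od 0) = 0" unfolding mat2_eq by simp
  have D2: "((\<lambda>y. Tm (A y) (od (?W y))) has_derivative (\<lambda>h. Tm (A z) (od (?dW h)))) (at z)"
    unfolding Tm_def
    apply (rule has_derivative_eq_rhs[OF D])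
    apply (simp add: W0 hz)
    done
  show ?thesis
    apply (rule has_derivative_transform_within_open[OF D2 U z])
    using eta_FE by simp
qed

lemma X_eq:
  assumes z: "z \<in> U" and eta: "\<eta> differentiable (at z)" and W0: "Wf s (\<alpha> z) (\<beta> z) (\<eta> z) = 0"
  shows "eta_d \<eta> (eta_d \<eta> (FE A s)) z = Tm (A z) (od (cc s \<eta> z))"
proof -
  have e: "(\<eta> has_derivative frechet_derivative \<eta> (at z)) (at z)" using eta frechet_derivative_works by blast
  show ?thesis
    unfolding eta_d_def[of \<eta> "eta_d \<eta> (FE A s)"] cc_def
    using fun_cong[OF frechet_derivative_at[OF etaF_der[OF z e W0]], of "\<eta> z"] by simp
qed

lemma fd_decomp:
  assumes "\<eta> differentiable (at z)"
  shows "frechet_derivative \<eta> (at z) (\<eta> z) = Re (\<eta> z) *\<^sub>R frechet_derivative \<eta> (at z) 1 + Im (\<eta> z) *\<^sub>R frechet_derivative \<eta> (at z) \<i>"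
proof -
  have l: "linear (frechet_derivative \<eta> (at z))"
    using assms frechet_derivative_works has_derivative_linear by blast
  have e: "Re (\<eta> z) *\<^sub>R 1 + Im (\<eta> z) *\<^sub>R \<i> = \<eta> z" by (simp add: complex_eq_iff)
  have "frechet_derivative \<eta> (at z) (Re (\<eta> z) *\<^sub>R 1 + Im (\<eta> z) *\<^sub>R \<i>) = Re (\<eta> z) *\<^sub>R frechet_derivative \<eta> (at z) 1 + Im (\<eta> z) *\<^sub>R frechet_derivative \<eta> (at z) \<i>"
    by (simp only: linear_add[OF l] linear_cmul[OF l])
  then show ?thesis by (simp only: e)
qed

lemma cc_diff:
  assumes V: "cinf_on V \<eta>" "V \<subseteq> U" and z: "z \<in> V"
  shows "cc s \<eta> differentiable (at z)"
proof -
  have oV: "open V" using V unfolding cinf_on_def by blast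
  have zU: "z \<in> U" using V z by blast
  have ed: "\<eta> differentiable (at y)" if "y \<in> V" for y
    using cinf_has_derivative[OF V(1) that] differentiableI by blast
  have d1: "(\<lambda>y. frechet_derivative \<eta> (at y) 1) differentiable (at z)" using cinf_dd1[OF V(1) z] .
  have di: "(\<lambda>y. frechet_derivative \<eta> (at y) \<i>) differentiable (at z)" using cinf_dd1[OF V(1) z] .
  have dD: "(\<lambda>y. Re (\<eta> y) *\<^sub>R frechet_derivative \<eta> (at y) 1 + Im (\<eta> y) *\<^sub>R frechet_derivative \<eta> (at y) \<i>) differentiable (at z)"
    using ed[OF z] d1 di
    by (intro differentiable_add differentiable_scaleR bl_differentiable[OF bounded_linear_Re]
        bl_differentiable[OF bounded_linear_Im]) auto
  let ?R = "\<lambda>y. Wf s (deriv \<alpha> y * \<eta> y) (deriv \<beta> y * \<eta> y) (\<eta> y) + Wf s (\<alpha> y) (\<beta> y)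
          (Re (\<eta> y) *\<^sub>R frechet_derivative \<eta> (at y) 1 + Im (\<eta> y) *\<^sub>R frechet_derivative \<eta> (at y) \<i>)"
  have eqV: "?R y = cc s \<eta> y" if "y \<in> V" for y
    unfolding cc_def using fd_decomp[OF ed[OF that]] by simp
  have dR: "?R differentiable (at z)"
  proof -
    have ad: "\<alpha> differentiable (at z)" using differentiableI[OF a_der[OF zU, unfolded has_field_derivative_def]] .
    have bd: "\<beta> differentiable (at z)" using differentiableI[OF b_der[OF zU, unfolded has_field_derivative_def]] .
    have w1: "(\<lambda>y. Wf s (deriv \<alpha> y * \<eta> y) (deriv \<beta> y * \<eta> y) (\<eta> y)) differentiable (at z)"
      using da_diff[OF zU] db_diff[OF zU] ed[OF z]
      by (intro Wf_differentiable differentiable_mult) auto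
    have w2: "(\<lambda>y. Wf s (\<alpha> y) (\<beta> y) (Re (\<eta> y) *\<^sub>R frechet_derivative \<eta> (at y) 1 + Im (\<eta> y) *\<^sub>R frechet_derivative \<eta> (at y) \<i>)) differentiable (at z)"
      by (rule Wf_differentiable[OF ad bd dD])
    show ?thesis using differentiable_add[OF w1 w2] .
  qed
  show ?thesis by (rule differentiable_transform_open[OF dR oV z eqV])
qed

end


lemma curve_basics:
  fixes \<gamma> :: "real \<Rightarrow> complex"
  assumes cinf: "cinf_on I \<gamma>" and t: "t \<in> I"
  shows "(\<gamma> has_vector_derivative vector_derivative \<gamma> (at t)) (at t)"
    and "(\<lambda>r. vector_derivative \<gamma> (at r)) differentiable (at t)"
proof -
  have oI: "open I" using cinf unfolding cinf_on_def by blast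
  have hv: "(\<gamma> has_vector_derivative vector_derivative \<gamma> (at r)) (at r)" if "r \<in> I" for r
    using cinf_has_derivative[OF cinf that] differentiableI vector_derivative_works by blast
  then show "(\<gamma> has_vector_derivative vector_derivative \<gamma> (at t)) (at t)" using t by blast
  have eq: "frechet_derivative \<gamma> (at r) 1 = vector_derivative \<gamma> (at r)" if "r \<in> I" for r
  proof -
    have "(\<gamma> has_derivative (\<lambda>h. h *\<^sub>R vector_derivative \<gamma> (at r))) (at r)"
      using hv[OF that] unfolding has_vector_derivative_def .
    from frechet_derivative_at[OF this] show ?thesis by (metis scaleR_one)
  qed
  show "(\<lambda>r. vector_derivative \<gamma> (at r)) differentiable (at t)"
    by (rule differentiable_transform_open[OF cinf_dd1[OF cinf t, of 1] oI t eq])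
qed

lemma ex_delta_iff:
  fixes \<delta>0 \<epsilon> :: real
  assumes "\<delta>0 > 0" "\<delta>0 \<le> \<epsilon>" "\<forall>t\<in>{-\<delta>0<..<\<delta>0}. P t \<longleftrightarrow> Q t"
  shows "(\<exists>\<delta>>0. \<delta> \<le> \<epsilon> \<and> (\<forall>t\<in>{-\<delta><..<\<delta>}. P t)) \<longleftrightarrow> (\<exists>\<delta>>0. \<delta> \<le> \<epsilon> \<and> (\<forall>t\<in>{-\<delta><..<\<delta>}. Q t))"
proof
  assume "\<exists>\<delta>>0. \<delta> \<le> \<epsilon> \<and> (\<forall>t\<in>{-\<delta><..<\<delta>}. P t)"
  then obtain \<delta> where d: "\<delta> > 0" "\<delta> \<le> \<epsilon>" "\<forall>t\<in>{-\<delta><..<\<delta>}. P t" by blast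
  show "\<exists>\<delta>>0. \<delta> \<le> \<epsilon> \<and> (\<forall>t\<in>{-\<delta><..<\<delta>}. Q t)"
    using assms d by (intro exI[of _ "min \<delta> \<delta>0"]) (auto simp: min_def)
next
  assume "\<exists>\<delta>>0. \<delta> \<le> \<epsilon> \<and> (\<forall>t\<in>{-\<delta><..<\<delta>}. Q t)"
  then obtain \<delta> where d: "\<delta> > 0" "\<delta> \<le> \<epsilon>" "\<forall>t\<in>{-\<delta><..<\<delta>}. Q t" by blast
  show "\<exists>\<delta>>0. \<delta> \<le> \<epsilon> \<and> (\<forall>t\<in>{-\<delta><..<\<delta>}. P t)"
    using assms d by (intro exI[of _ "min \<delta> \<delta>0"]) (auto simp: min_def)
qed

lemma loc_pointwise: "line_of_curvature K N \<gamma> S \<longleftrightarrow> (\<forall>t\<in>S. line_of_curvature K N \<gamma> {t})"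
  unfolding line_of_curvature_def by auto

lemma herm4_zero [simp]: "herm4 0 = 0"
  unfolding vec4_eq by simp

lemma hm_od_0 [simp]: "hm (od 0) = 0"
  unfolding mat2_eq by simp

lemma od_has_vd: "(m has_vector_derivative m') F \<Longrightarrow> ((\<lambda>r. od (m r)) has_vector_derivative od m') F"
  unfolding has_vector_derivative_def
  by (drule bounded_linear.has_derivative[OF bounded_linear_od]) (simp add: od_scaleR)

context flat
begin

lemma B_der:
  assumes g: "(\<gamma> has_vector_derivative v) (at t)" and U: "\<gamma> t \<in> U"
  shows "((\<lambda>r. A (\<gamma> r)) has_vector_derivative A (\<gamma> t) ** Dmat (\<alpha> (\<gamma> t) * v) (\<beta> (\<gamma> t) * v)) (at t)"
proof -
  have "(A \<circ> \<gamma> has_derivative (\<lambda>h. A (\<gamma> t) ** Dmat (\<alpha> (\<gamma> t) * h) (\<beta> (\<gamma> t) * h)) \<circ> (\<lambda>h. h *\<^sub>R v)) (at t)"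
    using diff_chain_at[OF g[unfolded has_vector_derivative_def] A_der[OF U]] .
  then show ?thesis
    unfolding has_vector_derivative_def o_def
    by (simp add: scaleR_conv_of_real[of _ v] Dmat_scale mm_scaleR_right del: scaleR_conv_of_real)
qed

lemma FEg_der:
  assumes g: "(\<gamma> has_vector_derivative v) (at t)" and U: "\<gamma> t \<in> U"
  shows "((FE A s \<circ> \<gamma>) has_vector_derivative Tm (A (\<gamma> t)) (od (Wf s (\<alpha> (\<gamma> t)) (\<beta> (\<gamma> t)) v))) (at t)"
proof -
  have "(FE A s \<circ> \<gamma> has_derivative dFE s (\<gamma> t) \<circ> (\<lambda>h. h *\<^sub>R v)) (at t)"
    using diff_chain_at[OF g[unfolded has_vector_derivative_def] FE_der[OF U]] .
  then show ?thesis
    unfolding has_vector_derivative_def o_def dFE_scale by (simp add: dFE_def)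
qed

lemma comp_diff:
  assumes "(\<gamma> :: real \<Rightarrow> complex) differentiable (at t)" "\<gamma> t \<in> U"
  shows "(\<lambda>r. \<alpha> (\<gamma> r)) differentiable (at t)" "(\<lambda>r. \<beta> (\<gamma> r)) differentiable (at t)"
proof -
  have ad: "\<alpha> differentiable (at (\<gamma> t))" using differentiableI[OF a_der[OF assms(2), unfolded has_field_derivative_def]] .
  have bd: "\<beta> differentiable (at (\<gamma> t))" using differentiableI[OF b_der[OF assms(2), unfolded has_field_derivative_def]] .
  show "(\<lambda>r. \<alpha> (\<gamma> r)) differentiable (at t)" using differentiable_chain_at[OF assms(1) ad] unfolding o_def .
  show "(\<lambda>r. \<beta> (\<gamma> r)) differentiable (at t)" using differentiable_chain_at[OF assms(1) bd] unfolding o_def .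
qed

end


context flat
begin

lemma main_generic:
  fixes \<gamma> :: "real \<Rightarrow> complex" and \<eta> :: "complex \<Rightarrow> complex"
  assumes s: "s = 1 \<or> s = -1"
    and \<epsilon>: "\<epsilon> > 0" and cinf: "cinf_on {-\<epsilon><..<\<epsilon>} \<gamma>" and g0: "\<gamma> 0 = p"
    and gv: "\<forall>t\<in>{-\<epsilon><..<\<epsilon>}. vector_derivative \<gamma> (at t) \<noteq> 0 \<and> \<gamma> t \<in> sing_set U (FE A s)"
    and ce: "cusp_edge U (FE A s) p" and nv: "null_vf U (FE A s) \<eta> V" and pV: "p \<in> V"
  shows "\<exists>\<delta>0>0. \<delta>0 \<le> \<epsilon> \<and> (\<forall>t\<in>{-\<delta>0<..<\<delta>0}.
            line_of_curvature (FE A s) (FE A (-s)) \<gamma> {t} \<longleftrightarrow> cusp_torsion (FE A s) \<gamma> \<eta> t = 0)"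
proof -
  have s2: "s^2 = 1" "(-s)^2 = 1" using s by auto
  define I where "I = {-\<epsilon><..<\<epsilon>}"
  have oI: "open I" unfolding I_def by simp
  have I0: "0 \<in> I" unfolding I_def using \<epsilon> by simp
  define v where "v t = vector_derivative \<gamma> (at t)" for t
  define w where "w t = Wf s (\<alpha> (\<gamma> t)) (\<beta> (\<gamma> t)) (v t)" for t
  define u where "u t = Wf (-s) (\<alpha> (\<gamma> t)) (\<beta> (\<gamma> t)) (v t)" for t
  define B where "B t = A (\<gamma> t)" for t
  have gI: "\<gamma> t \<in> U" "cmod (\<alpha> (\<gamma> t)) = cmod (\<beta> (\<gamma> t))" if "t \<in> I" for t
    using gv that sing_iff[OF s2(1)] unfolding I_def by auto
  have gd: "(\<gamma> has_vector_derivative v t) (at t)" if "t \<in> I" for t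
    using curve_basics(1)[OF cinf] that unfolding I_def v_def by blast
  have vd: "v differentiable (at t)" if "t \<in> I" for t
    using curve_basics(2)[OF cinf] that unfolding I_def v_def by blast
  have gdiff: "\<gamma> differentiable (at t)" if "t \<in> I" for t using differentiableI_vector[OF gd[OF that]] .
  have wd: "w differentiable (at t)" if "t \<in> I" for t
    unfolding w_def using comp_diff[OF gdiff[OF that] gI(1)[OF that]] vd[OF that]
    by (intro Wf_differentiable) auto
  have Bd: "(B has_vector_derivative B t ** Dmat (\<alpha> (\<gamma> t) * v t) (\<beta> (\<gamma> t) * v t)) (at t)" if "t \<in> I" for t
    unfolding B_def using B_der[OF gd[OF that] gI(1)[OF that]] .
  have Fd: "((FE A s \<circ> \<gamma>) has_vector_derivative Tm (B t) (od (w t))) (at t)" if "t \<in> I" for t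
    unfolding B_def w_def using FEg_der[OF gd[OF that] gI(1)[OF that]] .
  have Nd: "((FE A (-s) \<circ> \<gamma>) has_vector_derivative Tm (B t) (od (u t))) (at t)" if "t \<in> I" for t
    unfolding B_def u_def using FEg_der[OF gd[OF that] gI(1)[OF that]] .
  have g1eq: "vector_derivative (FE A s \<circ> \<gamma>) (at t) = Tm (B t) (od (w t))" if "t \<in> I" for t
    using vector_derivative_at[OF Fd[OF that]] .
  have n1eq: "vector_derivative (FE A (-s) \<circ> \<gamma>) (at t) = Tm (B t) (od (u t))" if "t \<in> I" for t
    using vector_derivative_at[OF Nd[OF that]] .
  have oV: "open V" and VU: "V \<subseteq> U" and cV: "cinf_on V \<eta>"
    and nul: "\<And>q. q \<in> V \<Longrightarrow> q \<in> sing_set U (FE A s) \<Longrightarrow> \<eta> q \<noteq> 0 \<and> frechet_derivative (FE A s) (at q) (\<eta> q) = 0"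
    using nv unfolding null_vf_def by auto
  have Wnull: "Wf s (\<alpha> q) (\<beta> q) (\<eta> q) = 0" "\<eta> q \<noteq> 0" if "q \<in> V" "q \<in> sing_set U (FE A s)" for q
  proof -
    have qU: "q \<in> U" using that VU by blast
    show "Wf s (\<alpha> q) (\<beta> q) (\<eta> q) = 0" using nul[OF that] FE_fd[OF qU] dFE_eq_0[OF qU] by simp
    show "\<eta> q \<noteq> 0" using nul[OF that] by blast
  qed
  have etad: "\<eta> differentiable (at q)" if "q \<in> V" for q
    using cinf_has_derivative[OF cV that] differentiableI by blast
  have pU: "p \<in> U" using VU pV by blast
  have psing: "p \<in> sing_set U (FE A s)" using gv I0 g0 unfolding I_def by auto
  have dF: "\<And>z. z \<in> U \<Longrightarrow> (FE A s has_derivative dFE s z) (at z)" using FE_der by blast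
  have gs: "\<And>t. t \<in> {-\<epsilon><..<\<epsilon>} \<Longrightarrow> \<gamma> t \<in> sing_set U (FE A s)" using gv by blast
  have g1v: "(\<gamma> has_vector_derivative v 0) (at 0)" using gd[OF I0] .
  have v0: "v 0 \<noteq> 0" using gv I0 unfolding I_def v_def by auto
  note CA = cusp_analysis[OF U dF ce \<epsilon> g0 g1v v0 gs]
  have N1: "dFE s p (v 0) \<noteq> 0" using CA by blast
  have N2: "\<exists>\<sigma> \<tau> \<sigma>2 \<delta>2 G2. \<delta>2 > 0 \<and> \<sigma> 0 = p \<and>
       (\<forall>r. \<bar>r\<bar> < \<delta>2 \<longrightarrow> \<sigma> r \<in> U \<and> (\<sigma> has_vector_derivative \<tau> r) (at r)) \<and>
       (\<tau> has_vector_derivative \<sigma>2) (at 0) \<and> \<tau> 0 \<noteq> 0 \<and> dFE s p (\<tau> 0) = 0 \<and>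
       ((\<lambda>r. dFE s (\<sigma> r) (\<tau> r)) has_vector_derivative G2) (at 0) \<and> (\<forall>\<mu>. G2 \<noteq> \<mu> *\<^sub>R dFE s p (v 0))"
    using CA by blast
  have wv: "w 0 = Wf s (\<alpha> p) (\<beta> p) (v 0)" unfolding w_def using g0 by simp
  have w0: "w 0 \<noteq> 0" using N1 dFE_eq_0[OF pU] wv by simp
  have nd0: "crs (w 0) (cc s \<eta> p) \<noteq> 0"
  proof
    assume c0: "crs (w 0) (cc s \<eta> p) = 0"
    from N2 obtain \<sigma> \<tau> \<sigma>2 \<delta>2 G2 where \<delta>2: "\<delta>2 > 0" and sig0: "\<sigma> 0 = p"
      and sigd: "\<And>r. \<bar>r\<bar> < \<delta>2 \<Longrightarrow> \<sigma> r \<in> U \<and> (\<sigma> has_vector_derivative \<tau> r) (at r)"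
      and tau: "(\<tau> has_vector_derivative \<sigma>2) (at 0)" and tau0: "\<tau> 0 \<noteq> 0" and dFt: "dFE s p (\<tau> 0) = 0"
      and G2: "((\<lambda>r. dFE s (\<sigma> r) (\<tau> r)) has_vector_derivative G2) (at 0)"
      and np: "\<forall>\<mu>. G2 \<noteq> \<mu> *\<^sub>R dFE s p (v 0)"
      by blast
    have s0: "(\<sigma> has_vector_derivative \<tau> 0) (at 0)" using sigd[of 0] \<delta>2 by simp
    define m where "m r = Wf s (\<alpha> (\<sigma> r)) (\<beta> (\<sigma> r)) (\<tau> r)" for r
    define m' where "m' = Wf s (deriv \<alpha> p * \<tau> 0) (deriv \<beta> p * \<tau> 0) (\<tau> 0) + Wf s (\<alpha> p) (\<beta> p) \<sigma>2"
    have ad: "((\<lambda>r. \<alpha> (\<sigma> r)) has_vector_derivative \<tau> 0 * deriv \<alpha> p) (at 0)"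
      using field_vector_diff_chain_at[OF s0, of \<alpha>] a_der[OF pU] sig0 by (simp add: o_def)
    have bd: "((\<lambda>r. \<beta> (\<sigma> r)) has_vector_derivative \<tau> 0 * deriv \<beta> p) (at 0)"
      using field_vector_diff_chain_at[OF s0, of \<beta>] b_der[OF pU] sig0 by (simp add: o_def)
    have md: "(m has_vector_derivative m') (at 0)"
    proof -
      have c: "((\<lambda>r. complex_of_real s) has_vector_derivative 0) (at 0)" by (rule has_vector_derivative_const)
      have "((\<lambda>r. complex_of_real s * \<alpha> (\<sigma> r) * \<tau> r + cnj (\<beta> (\<sigma> r) * \<tau> r)) has_vector_derivative
          (complex_of_real s * \<alpha> (\<sigma> 0) * \<sigma>2 + (complex_of_real s * (\<tau> 0 * deriv \<alpha> p) + 0 * \<alpha> (\<sigma> 0)) * \<tau> 0)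
          + cnj (\<beta> (\<sigma> 0) * \<sigma>2 + \<tau> 0 * deriv \<beta> p * \<tau> 0)) (at 0)"
        by (intro has_vector_derivative_add has_vector_derivative_mult has_vector_derivative_cnj c ad bd tau)
      then show ?thesis unfolding m_def m'_def Wf_def sig0
        by (rule has_vector_derivative_eq_rhs) (simp add: algebra_simps)
    qed
    have m0: "m 0 = 0" using dFt dFE_eq_0[OF pU] sig0 unfolding m_def by simp
    have BBd: "((\<lambda>r. A (\<sigma> r)) has_vector_derivative A (\<sigma> 0) ** Dmat (\<alpha> (\<sigma> 0) * \<tau> 0) (\<beta> (\<sigma> 0) * \<tau> 0)) (at 0)"
      using B_der[OF s0] sig0 pU by simp
    have Td: "((\<lambda>r. Tm (A (\<sigma> r)) (od (m r))) has_vector_derivative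
        Tm (A (\<sigma> 0)) (herm4 (Dmat (\<alpha> (\<sigma> 0) * \<tau> 0) (\<beta> (\<sigma> 0) * \<tau> 0) ** hm (od (m 0))
          + hm (od (m 0)) ** herm_adj (Dmat (\<alpha> (\<sigma> 0) * \<tau> 0) (\<beta> (\<sigma> 0) * \<tau> 0))) + od m')) (at 0)"
      by (rule curve_Tm_deriv[OF BBd od_has_vd[OF md]])
    have G2eq: "G2 = Tm (A p) (od m')"
    proof -
      have fe: "(\<lambda>r. dFE s (\<sigma> r) (\<tau> r)) = (\<lambda>r. Tm (A (\<sigma> r)) (od (m r)))" unfolding dFE_def m_def by simp
      have "((\<lambda>r. dFE s (\<sigma> r) (\<tau> r)) has_vector_derivative Tm (A p) (od m')) (at 0)"
        unfolding fe using Td m0 sig0 by simp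
      then show ?thesis using G2 vector_derivative_unique_at by blast
    qed
    have Wp: "Wf s (\<alpha> p) (\<beta> p) (\<eta> p) = 0" "\<eta> p \<noteq> 0" using Wnull[OF pV psing] by auto
    have Wt: "Wf s (\<alpha> p) (\<beta> p) (\<tau> 0) = 0" using m0 sig0 unfolding m_def by simp
    have Wv: "Wf s (\<alpha> p) (\<beta> p) (v 0) \<noteq> 0" using w0 wv by simp
    obtain \<kappa> where kap: "\<tau> 0 = complex_of_real \<kappa> * \<eta> p"
      using Wf_kernel[OF Wp(1) Wt Wv Wp(2)] by blast
    have rk: "crs (w 0) (Wf s (\<alpha> p) (\<beta> p) x) = 0" for x
      unfolding wv using crs_Wf_rank1[OF s2(1)] gI(2)[OF I0] g0 by simp
    have m'eq: "m' = complex_of_real (\<kappa>^2) * Wf s (deriv \<alpha> p * \<eta> p) (deriv \<beta> p * \<eta> p) (\<eta> p) + Wf s (\<alpha> p) (\<beta> p) \<sigma>2"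
      unfolding m'_def kap by (simp only: Wf_scale3)
    have cceq: "cc s \<eta> p = Wf s (deriv \<alpha> p * \<eta> p) (deriv \<beta> p * \<eta> p) (\<eta> p) + Wf s (\<alpha> p) (\<beta> p) (frechet_derivative \<eta> (at p) (\<eta> p))"
      unfolding cc_def ..
    have "crs (w 0) (cc s \<eta> p) = crs (w 0) (Wf s (deriv \<alpha> p * \<eta> p) (deriv \<beta> p * \<eta> p) (\<eta> p))"
      unfolding cceq by (simp add: crs_add_right rk)
    moreover have "crs (w 0) m' = \<kappa>^2 * crs (w 0) (Wf s (deriv \<alpha> p * \<eta> p) (deriv \<beta> p * \<eta> p) (\<eta> p))"
      unfolding m'eq by (simp only: crs_add_right crs_scale_right rk add_0_right)
    ultimately have "crs (w 0) m' = 0" using c0 by simp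
    then have mm: "m' = complex_of_real (dotc (w 0) m' / dotc (w 0) (w 0)) * w 0" using crs_zero_par w0 by blast
    have "G2 = Tm (A p) (od (complex_of_real (dotc (w 0) m' / dotc (w 0) (w 0)) * w 0))"
      unfolding G2eq by (subst mm) (rule refl)
    also have "\<dots> = (dotc (w 0) m' / dotc (w 0) (w 0)) *\<^sub>R dFE s p (v 0)"
      unfolding dFE_def wv[symmetric] by (simp only: od_of_real_mult Tm_scaleR)
    finally show False using np by blast
  qed
  have wc: "continuous (at 0) w" using differentiable_imp_continuous_within[OF wd[OF I0]] .
  have gc: "continuous (at 0) \<gamma>" using differentiable_imp_continuous_within[OF gdiff[OF I0]] .
  have ccc: "continuous (at 0) (\<lambda>t. cc s \<eta> (\<gamma> t))"
  proof -
    have "continuous (at (\<gamma> 0)) (cc s \<eta>)"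
      using differentiable_imp_continuous_within[OF cc_diff[OF cV VU pV]] g0 by simp
    then show ?thesis using continuous_at_compose[OF gc] unfolding o_def by blast
  qed
  have fc: "continuous (at 0) (\<lambda>t. crs (w t) (cc s \<eta> (\<gamma> t)))"
    unfolding crs_def using wc ccc by (intro continuous_intros) auto
  obtain e1 where e1: "e1 > 0" "\<And>t. dist 0 t < e1 \<Longrightarrow> crs (w t) (cc s \<eta> (\<gamma> t)) \<noteq> 0"
    using continuous_at_avoid[OF fc, of 0] nd0 g0 by auto
  obtain e2 where e2: "e2 > 0" "\<And>t. dist 0 t < e2 \<Longrightarrow> w t \<noteq> 0"
    using continuous_at_avoid[OF wc w0] by auto
  obtain e3 where e3: "e3 > 0" "\<And>t. dist 0 t < e3 \<Longrightarrow> \<gamma> t \<in> V"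
  proof -
    obtain S where S: "open S" "0 \<in> S" "\<And>x. x \<in> S \<Longrightarrow> \<gamma> x \<in> V"
      using gc[unfolded continuous_at_open] oV pV g0 by metis
    obtain e where e: "e > 0" "ball 0 e \<subseteq> S" using S(1,2) open_contains_ball by blast
    have "\<gamma> t \<in> V" if "dist 0 t < e" for t using S(3) e(2) that by auto
    then show ?thesis using that e(1) by blast
  qed
  define \<delta>0 where "\<delta>0 = min (min e1 e2) (min e3 \<epsilon>)"
  have \<delta>0: "\<delta>0 > 0" "\<delta>0 \<le> \<epsilon>" unfolding \<delta>0_def using e1 e2 e3 \<epsilon> by auto
  define J where "J = ball (0::real) \<delta>0"
  have oJ: "open J" unfolding J_def by simp
  have Jprops: "r \<in> I" "\<gamma> r \<in> V" "w r \<noteq> 0" "crs (w r) (cc s \<eta> (\<gamma> r)) \<noteq> 0" if "r \<in> J" for r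
  proof -
    have d: "dist 0 r < \<delta>0" using that unfolding J_def by simp
    show "r \<in> I" using d unfolding I_def \<delta>0_def by (auto simp: dist_real_def)
    show "\<gamma> r \<in> V" using d e3 unfolding \<delta>0_def by auto
    show "w r \<noteq> 0" using d e2 unfolding \<delta>0_def by auto
    show "crs (w r) (cc s \<eta> (\<gamma> r)) \<noteq> 0" using d e1 unfolding \<delta>0_def by auto
  qed
  have main: "line_of_curvature (FE A s) (FE A (-s)) \<gamma> {t} \<longleftrightarrow> cusp_torsion (FE A s) \<gamma> \<eta> t = 0"
    if tJ: "t \<in> J" for t
  proof -
    note tp = Jprops[OF tJ]
    have tI: "t \<in> I" using tp(1) .
    define c where "c r = cc s \<eta> (\<gamma> r)" for r
    have Xeq: "eta_d \<eta> (eta_d \<eta> (FE A s)) (\<gamma> r) = Tm (B r) (od (c r))" if "r \<in> J" for r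
    proof -
      note rp = Jprops[OF that]
      have sg: "\<gamma> r \<in> sing_set U (FE A s)" using gs rp(1) unfolding I_def by blast
      show ?thesis unfolding B_def c_def
        using X_eq[OF gI(1)[OF rp(1)] etad[OF rp(2)] Wnull(1)[OF rp(2) sg]] .
    qed
    have cdiff: "c differentiable (at t)"
      unfolding c_def using differentiable_chain_at[OF gdiff[OF tI] cc_diff[OF cV VU tp(2)]] by (simp add: o_def)
    obtain c' where c': "(c has_vector_derivative c') (at t)" using cdiff vector_derivative_works by blast
    obtain w' where w': "(w has_vector_derivative w') (at t)" using wd[OF tI] vector_derivative_works by blast
    let ?D = "Dmat (\<alpha> (\<gamma> t) * v t) (\<beta> (\<gamma> t) * v t)"
    define Y1 where "Y1 = herm4 (?D ** hm (od (c t)) + hm (od (c t)) ** herm_adj ?D) + od c'"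
    define Y2 where "Y2 = herm4 (?D ** hm (od (w t)) + hm (od (w t)) ** herm_adj ?D) + od w'"
    have Xd: "((\<lambda>r. eta_d \<eta> (eta_d \<eta> (FE A s)) (\<gamma> r)) has_vector_derivative Tm (B t) Y1) (at t)"
    proof -
      have "((\<lambda>r. Tm (B r) (od (c r))) has_vector_derivative Tm (B t) Y1) (at t)"
        unfolding Y1_def by (rule curve_Tm_deriv[OF Bd[OF tI] od_has_vd[OF c']])
      then show ?thesis
        by (rule has_vector_derivative_transform_within_open[OF _ oJ tJ]) (simp add: Xeq)
    qed
    have G1d: "((\<lambda>r. vector_derivative (FE A s \<circ> \<gamma>) (at r)) has_vector_derivative Tm (B t) Y2) (at t)"
    proof -
      have "((\<lambda>r. Tm (B r) (od (w r))) has_vector_derivative Tm (B t) Y2) (at t)"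
        unfolding Y2_def by (rule curve_Tm_deriv[OF Bd[OF tI] od_has_vd[OF w']])
      then show ?thesis
        by (rule has_vector_derivative_transform_within_open[OF _ oI tI]) (simp add: g1eq)
    qed
    have Q1: "Qs s Y1 = - dotc (u t) (c t)"
      unfolding Y1_def Qs_frame_second u_def by (simp add: Wf_1[of "-s" _ _ "v t"])
    have Q2: "Qs s Y2 = - dotc (u t) (w t)"
      unfolding Y2_def Qs_frame_second u_def by (simp add: Wf_1[of "-s" _ _ "v t"])
    have dB: "cmod (det (B t)) = 1" unfolding B_def using detA(2)[OF gI(1)[OF tI]] .
    have ct: "crs (w t) (c t) \<noteq> 0" using tp(4) unfolding c_def .
    have tors: "cusp_torsion (FE A s) \<gamma> \<eta> t =
       det4 (Tm (B t) (es s)) (Tm (B t) (od (w t))) (Tm (B t) (od (c t))) (Tm (B t) Y1) / gram (Tm (B t) (od (w t))) (Tm (B t) (od (c t)))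
        - det4 (Tm (B t) (es s)) (Tm (B t) (od (w t))) (Tm (B t) (od (c t))) (Tm (B t) Y2) * lor (Tm (B t) (od (w t))) (Tm (B t) (od (c t)))
          / (lor (Tm (B t) (od (w t))) (Tm (B t) (od (w t))) * gram (Tm (B t) (od (w t))) (Tm (B t) (od (c t))))"
      unfolding cusp_torsion_def Let_def
      using vector_derivative_at[OF Xd] vector_derivative_at[OF G1d] g1eq[OF tI] Xeq[OF tJ]
      by (simp add: FE_def B_def)
    have T: "cusp_torsion (FE A s) \<gamma> \<eta> t = 0 \<longleftrightarrow> crs (w t) (u t) = 0"
      unfolding tors using torsion_alg[OF dB tp(3) ct Q1 Q2] .
    have L: "line_of_curvature (FE A s) (FE A (-s)) \<gamma> {t} \<longleftrightarrow> crs (w t) (u t) = 0"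
    proof -
      have detB: "det (B t) \<noteq> 0" using dB by auto
      have e: "a *\<^sub>R Tm (B t) (od (w t)) + b *\<^sub>R Tm (B t) (od (u t)) = 0 \<longleftrightarrow>
          complex_of_real a * w t + complex_of_real b * u t = 0" for a b
      proof -
        have "a *\<^sub>R Tm (B t) (od (w t)) + b *\<^sub>R Tm (B t) (od (u t)) = Tm (B t) (od (complex_of_real a * w t + complex_of_real b * u t))"
          by (simp only: od_add od_of_real_mult Tm_add Tm_scaleR)
        then show ?thesis using Tm_eq_0_iff[OF detB] od_eq_0 by simp
      qed
      show ?thesis
        unfolding line_of_curvature_def using g1eq[OF tI] n1eq[OF tI] e par_iff[OF tp(3)] by simp
    qed
    show ?thesis using T L by simp
  qed
  show ?thesis
    apply (rule exI[of _ \<delta>0])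
    using \<delta>0 main unfolding J_def by (auto simp: dist_real_def)
qed

end


theorem proposition4p1:
  fixes U :: "complex set" and \<alpha> \<beta> :: "complex \<Rightarrow> complex"
    and A :: "complex \<Rightarrow> complex^2^2" and p :: complex
    and \<gamma> :: "real \<Rightarrow> complex" and \<epsilon> :: real
    and \<eta> \<zeta> :: "complex \<Rightarrow> complex" and V W :: "complex set"
  assumes U: "open U" "connected U"
    and hol: "\<alpha> holomorphic_on U" "\<beta> holomorphic_on U"
    and nz: "\<forall>z\<in>U. \<alpha> z \<noteq> 0 \<and> \<beta> z \<noteq> 0"
    and SL: "\<forall>z\<in>U. det (A z) = 1"
    and ode: "\<forall>z\<in>U. \<forall>i j. ((\<lambda>w. A w $ i $ j) has_field_derivative
                             ((A z ** Dmat (\<alpha> z) (\<beta> z)) $ i $ j)) (at z)"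
    and curve: "sing_curve U (hyp_front A) \<gamma> \<epsilon> p"
  shows "(cusp_edge U (hyp_front A) p \<and> null_vf U (hyp_front A) \<eta> V \<and> p \<in> V \<longrightarrow>
            ((\<exists>\<delta>>0. \<delta> \<le> \<epsilon> \<and> line_of_curvature (hyp_front A) (ds_front A) \<gamma> {-\<delta><..<\<delta>})
             \<longleftrightarrow> (\<exists>\<delta>>0. \<delta> \<le> \<epsilon> \<and> (\<forall>t\<in>{-\<delta><..<\<delta>}. cusp_torsion (hyp_front A) \<gamma> \<eta> t = 0))))
       \<and> (cusp_edge U (ds_front A) p \<and> null_vf U (ds_front A) \<zeta> W \<and> p \<in> W \<longrightarrow>
            ((\<exists>\<delta>>0. \<delta> \<le> \<epsilon> \<and> line_of_curvature (ds_front A) (hyp_front A) \<gamma> {-\<delta><..<\<delta>})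
             \<longleftrightarrow> (\<exists>\<delta>>0. \<delta> \<le> \<epsilon> \<and> (\<forall>t\<in>{-\<delta><..<\<delta>}. cusp_torsion (ds_front A) \<gamma> \<zeta> t = 0))))"
proof -
  interpret flat U \<alpha> \<beta> A
    using U hol nz SL ode by unfold_locales auto
  have c: "\<epsilon> > 0" "cinf_on {-\<epsilon><..<\<epsilon>} \<gamma>" "\<gamma> 0 = p"
    "\<forall>t\<in>{-\<epsilon><..<\<epsilon>}. vector_derivative \<gamma> (at t) \<noteq> 0 \<and> \<gamma> t \<in> sing_set U (FE A 1)"
    using curve unfolding sing_curve_def hyp_front_FE by auto
  have seq: "sing_set U (FE A 1) = sing_set U (FE A (-1))"
    using sing_iff[of 1] sing_iff[of "-1"] by auto
  have c2: "\<forall>t\<in>{-\<epsilon><..<\<epsilon>}. vector_derivative \<gamma> (at t) \<noteq> 0 \<and> \<gamma> t \<in> sing_set U (FE A (-1))"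
    using c(4) seq by simp
  have P1: "(\<exists>\<delta>>0. \<delta> \<le> \<epsilon> \<and> line_of_curvature (hyp_front A) (ds_front A) \<gamma> {-\<delta><..<\<delta>})
             \<longleftrightarrow> (\<exists>\<delta>>0. \<delta> \<le> \<epsilon> \<and> (\<forall>t\<in>{-\<delta><..<\<delta>}. cusp_torsion (hyp_front A) \<gamma> \<eta> t = 0))"
    if h: "cusp_edge U (hyp_front A) p \<and> null_vf U (hyp_front A) \<eta> V \<and> p \<in> V"
  proof -
    obtain \<delta>0 where d: "\<delta>0 > 0" "\<delta>0 \<le> \<epsilon>" "\<forall>t\<in>{-\<delta>0<..<\<delta>0}.
            line_of_curvature (FE A 1) (FE A (-1)) \<gamma> {t} \<longleftrightarrow> cusp_torsion (FE A 1) \<gamma> \<eta> t = 0"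
      using main_generic[of 1 \<epsilon> \<gamma> p \<eta> V] c h unfolding hyp_front_FE by auto
    show ?thesis
      unfolding hyp_front_FE ds_front_FE
      by (subst loc_pointwise) (rule ex_delta_iff[OF d])
  qed
  have P2: "(\<exists>\<delta>>0. \<delta> \<le> \<epsilon> \<and> line_of_curvature (ds_front A) (hyp_front A) \<gamma> {-\<delta><..<\<delta>})
             \<longleftrightarrow> (\<exists>\<delta>>0. \<delta> \<le> \<epsilon> \<and> (\<forall>t\<in>{-\<delta><..<\<delta>}. cusp_torsion (ds_front A) \<gamma> \<zeta> t = 0))"
    if h: "cusp_edge U (ds_front A) p \<and> null_vf U (ds_front A) \<zeta> W \<and> p \<in> W"
  proof -
    obtain \<delta>0 where d: "\<delta>0 > 0" "\<delta>0 \<le> \<epsilon>" "\<forall>t\<in>{-\<delta>0<..<\<delta>0}.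
            line_of_curvature (FE A (-1)) (FE A (-(-1))) \<gamma> {t} \<longleftrightarrow> cusp_torsion (FE A (-1)) \<gamma> \<zeta> t = 0"
      using main_generic[of "-1" \<epsilon> \<gamma> p \<zeta> W] c(1-3) c2 h unfolding ds_front_FE by auto
    then have d3: "\<forall>t\<in>{-\<delta>0<..<\<delta>0}.
            line_of_curvature (FE A (-1)) (FE A 1) \<gamma> {t} \<longleftrightarrow> cusp_torsion (FE A (-1)) \<gamma> \<zeta> t = 0"
      by simp
    show ?thesis
      unfolding hyp_front_FE ds_front_FE
      by (subst loc_pointwise) (rule ex_delta_iff[OF d(1,2) d3])
  qed
  show ?thesis using P1 P2 by blast
qed


end
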